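(* The operator $\widetilde{R}$ is well-defined on circuits modulo $A$: for all circuits $c,d:a\to b$, if $c$ and $d$ are equal modulo $A$, then $\widetilde{R}[c]$ and $\widetilde{R}[d]$ are equal modulo $A$.
   Context: A circuit is a morphism of the free symmetric strict monoidal category whose objects are natural numbers (tensor = addition) generated by $\mathsf{discard}:1\to 0$, $\mathsf{copy}:1\to 2$, $\mathsf{zero}:0\to1$, $\mathsf{add}:2\to1$, $\mathsf{one}:0\to 1$, $\mathsf{and}:2\to 1$. Composition is diagrammatic ($f;g$ = first $f$ then $g$), $\sigma_{m,n}$ is the symmetry $m+n\to n+m$ ($\sigma=\sigma_{1,1}$), $\mathsf{copy}_n:n\to 2n$, $\mathsf{discard}_n:n\to0$ are the evident composites. $A$ is the set of equations: $\mathsf{copy};\sigma=\mathsf{copy}$; $\mathsf{copy};(\mathsf{copy}\otimes \mathrm{id}_1)=\mathsf{copy};(\mathrm{id}_1\otimes\mathsf{copy})$; $\mathsf{copy};(\mathsf{discard}\otimes\mathrm{id}_1)=\mathrm{id}_1$; for every circuit $f:a\to b$, $f;\mathsf{copy}_b=\mathsf{copy}_a;(f\otimes f)$ and $f;\mathsf{discard}_b=\mathsf{discard}_a$; commutativity, associativity and unit laws for $(\mathsf{add},\mathsf{zero})$ and for $(\mathsf{and},\mathsf{one})$; $\mathsf{copy};\mathsf{add}=\mathsf{discard};\mathsf{zero}$; and distributivity $(\mathrm{id}_1\otimes\mathsf{add});\mathsf{and}=(\mathsf{copy}\otimes\mathrm{id}_2);(\mathrm{id}_1\otimes\sigma\otimes\mathrm{id}_1);(\mathsf{and}\otimes\mathsf{and});\mathsf{add}$.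 "Equal modulo $A$" means related by the smallest congruence (w.r.t. composition and tensor, and including the symmetric monoidal laws) containing $A$. For each circuit $f:a\to b$ the circuit $\widetilde{R}[f]:a+b\to a$ is defined inductively (it is the syntactic reverse derivative, computing $(x,\delta)\mapsto J_f(x)^{T}\delta$): on generators, $\widetilde{R}[\mathsf{discard}]=\mathsf{discard};\mathsf{zero}$; $\widetilde{R}[\mathsf{copy}]=\mathsf{discard}\otimes\mathsf{add}$; $\widetilde{R}[\mathsf{zero}]=\mathsf{discard}$; $\widetilde{R}[\mathsf{one}]=\mathsf{discard}$; $\widetilde{R}[\mathsf{add}]=\mathsf{discard}\otimes\mathsf{discard}\otimes\mathsf{copy}$; $\widetilde{R}[\mathsf{and}]=(\sigma\otimes\mathsf{copy});(\mathrm{id}_1\otimes\sigma\otimes\mathrm{id}_1);(\mathsf{and}\otimes\mathsf{and})$ (i.e. $(x_1,x_2,\delta)\mapsto(x_2\delta,x_1\delta)$); on identities and symmetries, $\widetilde{R}[\mathrm{id}_n]=\mathsf{discard}_n\otimes\mathrm{id}_n$ and $\widetilde{R}[\sigma_{m,n}]=\mathsf{discard}_{m+n}\otimes\sigma_{n,m}$; for $f:a\to b$, $g:b\to c$, $\widetilde{R}[f;g]=(\mathsf{copy}_a\otimes\mathrm{id}_c);(\mathrm{id}_a\otimes f\otimes \mathrm{id}_c);(\mathrm{id}_a\otimes\widetilde{R}[g]);\widetilde{R}[f]$; for $f:a\to b$, $g:c\to d$, $\widetilde{R}[f\otimes g]=(\mathrm{id}_a\otimes\sigma_{c,b}\otimes\mathrm{id}_d);(\widetilde{R}[f]\otimes\widetilde{R}[g])$.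 *)

theory Defs
  imports Main
begin

datatype gen = Discard | Copy | Zero | Add | One | And

datatype circ =
    Gen gen
  | Id nat
  | Sym nat nat
  | Comp circ circ         (* diagrammatic: Comp f g = f ; g *)
  | Tens circ circ

fun gen_dom :: "gen \<Rightarrow> nat" where
  "gen_dom Discard = 1" | "gen_dom Copy = 1" | "gen_dom Zero = 0"
| "gen_dom Add = 2" | "gen_dom One = 0" | "gen_dom And = 2"

fun gen_cod :: "gen \<Rightarrow> nat" where
  "gen_cod Discard = 0" | "gen_cod Copy = 2" | "gen_cod Zero = 1"
| "gen_cod Add = 1" | "gen_cod One = 1" | "gen_cod And = 1"

inductive has_type :: "circ \<Rightarrow> nat \<Rightarrow> nat \<Rightarrow> bool" where
  ty_gen: "has_type (Gen g) (gen_dom g) (gen_cod g)"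
| ty_id: "has_type (Id n) n n"
| ty_sym: "has_type (Sym m n) (m + n) (n + m)"
| ty_comp: "has_type f a b \<Longrightarrow> has_type g b c \<Longrightarrow> has_type (Comp f g) a c"
| ty_tens: "has_type f a b \<Longrightarrow> has_type g c d \<Longrightarrow> has_type (Tens f g) (a + c) (b + d)"

fun dom :: "circ \<Rightarrow> nat" where
  "dom (Gen g) = gen_dom g"
| "dom (Id n) = n"
| "dom (Sym m n) = m + n"
| "dom (Comp f g) = dom f"
| "dom (Tens f g) = dom f + dom g"

fun cod :: "circ \<Rightarrow> nat" where
  "cod (Gen g) = gen_cod g"
| "cod (Id n) = n"
| "cod (Sym m n) = n + m"
| "cod (Comp f g) = cod g"
| "cod (Tens f g) = cod f + cod g"

abbreviation \<sigma> :: circ where "\<sigma> \<equiv> Sym 1 1"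

fun copy_n :: "nat \<Rightarrow> circ" where
  "copy_n 0 = Id 0"
| "copy_n (Suc n) = Comp (Tens (Gen Copy) (copy_n n)) (Tens (Tens (Id 1) (Sym 1 n)) (Id n))"

fun discard_n :: "nat \<Rightarrow> circ" where
  "discard_n 0 = Id 0"
| "discard_n (Suc n) = Tens (Gen Discard) (discard_n n)"

inductive eqA :: "nat \<Rightarrow> nat \<Rightarrow> circ \<Rightarrow> circ \<Rightarrow> bool" where
  refl: "has_type f a b \<Longrightarrow> eqA a b f f"
| sym: "eqA a b f g \<Longrightarrow> eqA a b g f"
| trans: "eqA a b f g \<Longrightarrow> eqA a b g h \<Longrightarrow> eqA a b f h"
| comp_cong: "eqA a b f f' \<Longrightarrow> eqA b c g g' \<Longrightarrow> eqA a c (Comp f g) (Comp f' g')"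
| tens_cong: "eqA a b f f' \<Longrightarrow> eqA c d g g' \<Longrightarrow> eqA (a + c) (b + d) (Tens f g) (Tens f' g')"
| id_left: "has_type f a b \<Longrightarrow> eqA a b (Comp (Id a) f) f"
| id_right: "has_type f a b \<Longrightarrow> eqA a b (Comp f (Id b)) f"
| comp_assoc: "has_type f a b \<Longrightarrow> has_type g b c \<Longrightarrow> has_type h c d \<Longrightarrow>
     eqA a d (Comp (Comp f g) h) (Comp f (Comp g h))"
| tens_assoc: "has_type f a b \<Longrightarrow> has_type g c d \<Longrightarrow> has_type h e p \<Longrightarrow>
     eqA (a + c + e) (b + d + p) (Tens (Tens f g) h) (Tens f (Tens g h))"
| tens_unit_left: "has_type f a b \<Longrightarrow> eqA a b (Tens (Id 0) f) f"
| tens_unit_right: "has_type f a b \<Longrightarrow> eqA a b (Tens f (Id 0)) f"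
| tens_id: "eqA (m + n) (m + n) (Tens (Id m) (Id n)) (Id (m + n))"
| interchange: "has_type f a b \<Longrightarrow> has_type g b c \<Longrightarrow> has_type h d e \<Longrightarrow> has_type k e p \<Longrightarrow>
     eqA (a + d) (c + p) (Comp (Tens f h) (Tens g k)) (Tens (Comp f g) (Comp h k))"
| sym_inv: "eqA (m + n) (m + n) (Comp (Sym m n) (Sym n m)) (Id (m + n))"
| sym_nat: "has_type f a b \<Longrightarrow> has_type g c d \<Longrightarrow>
     eqA (a + c) (d + b) (Comp (Sym a c) (Tens g f)) (Comp (Tens f g) (Sym b d))"
| sym_hex1: "eqA (m + n + p) (n + p + m) (Sym m (n + p))
     (Comp (Tens (Sym m n) (Id p)) (Tens (Id n) (Sym m p)))"
| sym_hex2: "eqA (m + n + p) (p + m + n) (Sym (m + n) p)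
     (Comp (Tens (Id m) (Sym n p)) (Tens (Sym m p) (Id n)))"
| sym_unit_right: "eqA m m (Sym m 0) (Id m)"
| sym_unit_left: "eqA n n (Sym 0 n) (Id n)"
| copy_comm: "eqA 1 2 (Comp (Gen Copy) \<sigma>) (Gen Copy)"
| copy_assoc: "eqA 1 3 (Comp (Gen Copy) (Tens (Gen Copy) (Id 1)))
                        (Comp (Gen Copy) (Tens (Id 1) (Gen Copy)))"
| copy_unit: "eqA 1 1 (Comp (Gen Copy) (Tens (Gen Discard) (Id 1))) (Id 1)"
| copy_nat: "has_type f a b \<Longrightarrow> eqA a (b + b) (Comp f (copy_n b)) (Comp (copy_n a) (Tens f f))"
| discard_nat: "has_type f a b \<Longrightarrow> eqA a 0 (Comp f (discard_n b)) (discard_n a)"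
| add_comm: "eqA 2 1 (Comp \<sigma> (Gen Add)) (Gen Add)"
| add_assoc: "eqA 3 1 (Comp (Tens (Gen Add) (Id 1)) (Gen Add)) (Comp (Tens (Id 1) (Gen Add)) (Gen Add))"
| add_unit_left: "eqA 1 1 (Comp (Tens (Gen Zero) (Id 1)) (Gen Add)) (Id 1)"
| add_unit_right: "eqA 1 1 (Comp (Tens (Id 1) (Gen Zero)) (Gen Add)) (Id 1)"
| and_comm: "eqA 2 1 (Comp \<sigma> (Gen And)) (Gen And)"
| and_assoc: "eqA 3 1 (Comp (Tens (Gen And) (Id 1)) (Gen And)) (Comp (Tens (Id 1) (Gen And)) (Gen And))"
| and_unit_left: "eqA 1 1 (Comp (Tens (Gen One) (Id 1)) (Gen And)) (Id 1)"
| and_unit_right: "eqA 1 1 (Comp (Tens (Id 1) (Gen One)) (Gen And)) (Id 1)"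
| copy_add: "eqA 1 1 (Comp (Gen Copy) (Gen Add)) (Comp (Gen Discard) (Gen Zero))"
| distrib: "eqA 3 1 (Comp (Tens (Id 1) (Gen Add)) (Gen And))
     (Comp (Comp (Comp (Tens (Gen Copy) (Id 2)) (Tens (Tens (Id 1) \<sigma>) (Id 1)))
                 (Tens (Gen And) (Gen And))) (Gen Add))"

fun Rgen :: "gen \<Rightarrow> circ" where
  "Rgen Discard = Comp (Gen Discard) (Gen Zero)"
| "Rgen Copy = Tens (Gen Discard) (Gen Add)"
| "Rgen Zero = Gen Discard"
| "Rgen One = Gen Discard"
| "Rgen Add = Tens (Tens (Gen Discard) (Gen Discard)) (Gen Copy)"
| "Rgen And = Comp (Comp (Tens \<sigma> (Gen Copy)) (Tens (Tens (Id 1) \<sigma>) (Id 1)))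
                   (Tens (Gen And) (Gen And))"

fun R :: "circ \<Rightarrow> circ" where
  "R (Gen g) = Rgen g"
| "R (Id n) = Tens (discard_n n) (Id n)"
| "R (Sym m n) = Tens (discard_n (m + n)) (Sym n m)"
| "R (Comp f g) =
     Comp (Comp (Comp (Tens (copy_n (dom f)) (Id (cod g)))
                      (Tens (Tens (Id (dom f)) f) (Id (cod g))))
                (Tens (Id (dom f)) (R g)))
          (R f)"
| "R (Tens f g) =
     Comp (Tens (Tens (Id (dom f)) (Sym (dom g) (cod f))) (Id (cod g)))
          (Tens (R f) (R g))"

end

theory Submission
  imports Defs
begin


fun wt :: "circ \<Rightarrow> bool" where
  "wt (Gen g) = True" | "wt (Id n) = True" | "wt (Sym m n) = True"
| "wt (Comp f g) = (wt f \<and> wt g \<and> cod f = dom g)"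
| "wt (Tens f g) = (wt f \<and> wt g)"

lemma has_type_iff: "has_type f a b \<longleftrightarrow> wt f \<and> dom f = a \<and> cod f = b"
proof
  assume "has_type f a b" then show "wt f \<and> dom f = a \<and> cod f = b"
    by induction auto
next
  assume "wt f \<and> dom f = a \<and> cod f = b" then show "has_type f a b"
  proof (induction f arbitrary: a b)
    case (Gen g) then show ?case using has_type.ty_gen by auto
  next
    case (Id n) then show ?case using has_type.ty_id by auto
  next
    case (Sym m n) then show ?case using has_type.ty_sym by auto
  next
    case (Comp f g) then show ?case using has_type.ty_comp by auto
  next
    case (Tens f g) then show ?case using has_type.ty_tens by fastforce
  qed
qed

lemma dn_simps[simp]: "wt (discard_n n)" "dom (discard_n n) = n" "cod (discard_n n) = 0"
  by (induction n) auto
lemma cn_simps[simp]: "wt (copy_n n)" "dom (copy_n n) = n" "cod (copy_n n) = n + n"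
  by (induction n) auto

lemma eqA_typed: "eqA a b f g \<Longrightarrow> has_type f a b \<and> has_type g a b"
  by (induction rule: eqA.induct) (auto simp: has_type_iff)

lemma eqA_wt: "eqA a b f g \<Longrightarrow> wt f \<and> wt g \<and> dom f = a \<and> cod f = b \<and> dom g = a \<and> cod g = b"
  using eqA_typed has_type_iff by blast

lemmas [trans] = eqA.trans

lemma E_ix: "eqA a b f g \<Longrightarrow> a = a' \<Longrightarrow> b = b' \<Longrightarrow> eqA a' b' f g" by simp

lemma E_refl: "wt f \<Longrightarrow> a = dom f \<Longrightarrow> b = cod f \<Longrightarrow> eqA a b f f"
  by (rule eqA.refl) (simp add: has_type_iff)

lemma E_comp: "eqA a (cod f) f f' \<Longrightarrow> eqA (cod f) c g g' \<Longrightarrow> eqA a c (Comp f g) (Comp f' g')"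
  by (rule eqA.comp_cong)
lemma E_compL: "eqA a b f f' \<Longrightarrow> wt g \<Longrightarrow> dom g = b \<Longrightarrow> c = cod g \<Longrightarrow> eqA a c (Comp f g) (Comp f' g)"
  by (rule eqA.comp_cong) (auto intro: E_refl)
lemma E_compR: "eqA b c g g' \<Longrightarrow> wt f \<Longrightarrow> cod f = b \<Longrightarrow> a = dom f \<Longrightarrow> eqA a c (Comp f g) (Comp f g')"
  by (rule eqA.comp_cong) (auto intro: E_refl)
lemma E_tens: "eqA (dom f) (cod f) f f' \<Longrightarrow> eqA (dom g) (cod g) g g' \<Longrightarrow> a = dom f + dom g \<Longrightarrow> b = cod f + cod g
   \<Longrightarrow> eqA a b (Tens f g) (Tens f' g')"
  using eqA.tens_cong by auto
lemma E_tensL: "eqA (dom f) (cod f) f f' \<Longrightarrow> wt g \<Longrightarrow> a = dom f + dom g \<Longrightarrow> b = cod f + cod g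
   \<Longrightarrow> eqA a b (Tens f g) (Tens f' g)"
  by (rule E_tens) (auto intro: E_refl)
lemma E_tensR: "eqA (dom g) (cod g) g g' \<Longrightarrow> wt f \<Longrightarrow> a = dom f + dom g \<Longrightarrow> b = cod f + cod g
   \<Longrightarrow> eqA a b (Tens f g) (Tens f g')"
  by (rule E_tens) (auto intro: E_refl)

lemma E_sym: "eqA a b f g \<Longrightarrow> eqA a b g f" by (rule eqA.sym)

lemma E_idl: "wt f \<Longrightarrow> n = dom f \<Longrightarrow> a = dom f \<Longrightarrow> b = cod f \<Longrightarrow> eqA a b (Comp (Id n) f) f"
  using eqA.id_left has_type_iff by auto
lemma E_idr: "wt f \<Longrightarrow> n = cod f \<Longrightarrow> a = dom f \<Longrightarrow> b = cod f \<Longrightarrow> eqA a b (Comp f (Id n)) f"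
  using eqA.id_right has_type_iff by auto
lemma E_assoc: "wt f \<Longrightarrow> wt g \<Longrightarrow> wt h \<Longrightarrow> cod f = dom g \<Longrightarrow> cod g = dom h \<Longrightarrow> a = dom f \<Longrightarrow> b = cod h \<Longrightarrow>
   eqA a b (Comp (Comp f g) h) (Comp f (Comp g h))"
  using eqA.comp_assoc[of f a "cod f" g "cod g" h b] has_type_iff by auto
lemma E_tassoc: "wt f \<Longrightarrow> wt g \<Longrightarrow> wt h \<Longrightarrow> a = dom f + dom g + dom h \<Longrightarrow> b = cod f + cod g + cod h \<Longrightarrow>
   eqA a b (Tens (Tens f g) h) (Tens f (Tens g h))"
  using eqA.tens_assoc[of f "dom f" "cod f" g "dom g" "cod g" h "dom h" "cod h"] has_type_iff by auto
lemma E_tul: "wt f \<Longrightarrow> a = dom f \<Longrightarrow> b = cod f \<Longrightarrow> eqA a b (Tens (Id 0) f) f"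
  using eqA.tens_unit_left has_type_iff by auto
lemma E_tur: "wt f \<Longrightarrow> a = dom f \<Longrightarrow> b = cod f \<Longrightarrow> eqA a b (Tens f (Id 0)) f"
  using eqA.tens_unit_right has_type_iff by auto
lemma E_inter: "wt f \<Longrightarrow> wt g \<Longrightarrow> wt h \<Longrightarrow> wt k \<Longrightarrow> cod f = dom g \<Longrightarrow> cod h = dom k \<Longrightarrow>
   a = dom f + dom h \<Longrightarrow> b = cod g + cod k \<Longrightarrow>
   eqA a b (Comp (Tens f h) (Tens g k)) (Tens (Comp f g) (Comp h k))"
  using eqA.interchange[of f "dom f" "cod f" g "cod g" h "dom h" "cod h" k "cod k"] has_type_iff by auto
lemma E_symnat: "wt f \<Longrightarrow> wt g \<Longrightarrow> x = dom f \<Longrightarrow> y = dom g \<Longrightarrow> x' = cod f \<Longrightarrow> y' = cod g \<Longrightarrow>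
   a = dom f + dom g \<Longrightarrow> b = cod g + cod f \<Longrightarrow>
   eqA a b (Comp (Sym x y) (Tens g f)) (Comp (Tens f g) (Sym x' y'))"
  using eqA.sym_nat[of f "dom f" "cod f" g "dom g" "cod g"] has_type_iff by auto
lemma E_copynat: "wt f \<Longrightarrow> n = cod f \<Longrightarrow> m = dom f \<Longrightarrow> a = dom f \<Longrightarrow> b = cod f + cod f \<Longrightarrow>
   eqA a b (Comp f (copy_n n)) (Comp (copy_n m) (Tens f f))"
  using eqA.copy_nat has_type_iff by auto
lemma E_discnat: "wt f \<Longrightarrow> n = cod f \<Longrightarrow> a = dom f \<Longrightarrow> b = 0 \<Longrightarrow>
   eqA a b (Comp f (discard_n n)) (discard_n a)"
  using eqA.discard_nat has_type_iff by auto
lemma E_symr: "a = m \<Longrightarrow> b = m \<Longrightarrow> eqA a b (Sym m 0) (Id m)" using eqA.sym_unit_right by simp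
lemma E_syml: "a = m \<Longrightarrow> b = m \<Longrightarrow> eqA a b (Sym 0 m) (Id m)" using eqA.sym_unit_left by simp
lemma E_tid: "k = m + n \<Longrightarrow> a = m + n \<Longrightarrow> b = m + n \<Longrightarrow> eqA a b (Tens (Id m) (Id n)) (Id k)"
  using eqA.tens_id by simp

section \<open>Mask coherence\<close>

fun ismask :: "circ \<Rightarrow> bool" where
  "ismask (Gen g) = (g = Discard)" | "ismask (Id n) = True" | "ismask (Sym m n) = False"
| "ismask (Comp f g) = (ismask f \<and> ismask g)"
| "ismask (Tens f g) = (ismask f \<and> ismask g)"

fun mcomp :: "bool list \<Rightarrow> bool list \<Rightarrow> bool list" where
  "mcomp [] ys = []"
| "mcomp (False # xs) ys = False # mcomp xs ys"
| "mcomp (True # xs) [] = True # mcomp xs []"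
| "mcomp (True # xs) (y # ys) = y # mcomp xs ys"

fun msem :: "circ \<Rightarrow> bool list" where
  "msem (Gen g) = [False]" | "msem (Id n) = replicate n True" | "msem (Sym m n) = []"
| "msem (Comp f g) = mcomp (msem f) (msem g)"
| "msem (Tens f g) = msem f @ msem g"

fun canon :: "bool list \<Rightarrow> circ" where
  "canon [] = Id 0"
| "canon (True # bs) = Tens (Id 1) (canon bs)"
| "canon (False # bs) = Tens (Gen Discard) (canon bs)"

lemma count_rep[simp]: "count_list (replicate n x) x = n" by (induction n) auto

lemma canon_simps[simp]: "wt (canon bs)" "dom (canon bs) = length bs" "cod (canon bs) = count_list bs True"
  by (induction bs rule: canon.induct) auto

lemma mcomp_len: "length (mcomp xs ys) = length xs"
  by (induction xs ys rule: mcomp.induct) auto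
lemma mcomp_count: "length ys = count_list xs True \<Longrightarrow> count_list (mcomp xs ys) True = count_list ys True"
  by (induction xs ys rule: mcomp.induct) auto

lemma msem_props: "ismask f \<Longrightarrow> wt f \<Longrightarrow> length (msem f) = dom f \<and> count_list (msem f) True = cod f"
  by (induction f) (auto simp: mcomp_len mcomp_count)

lemma canon_app: "eqA (length xs + length ys) (count_list xs True + count_list ys True)
    (Tens (canon xs) (canon ys)) (canon (xs @ ys))"
proof (induction xs rule: canon.induct)
  case 1 then show ?case by simp (rule E_tul, simp_all)
next
  case (2 bs)
  have "eqA (length (True # bs) + length ys) (count_list (True # bs) True + count_list ys True)
    (Tens (canon (True # bs)) (canon ys)) (Tens (Id 1) (Tens (canon bs) (canon ys)))"
    by simp (rule E_tassoc, simp_all)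
  also have "eqA (length (True # bs) + length ys) (count_list (True # bs) True + count_list ys True)
     \<dots> (canon ((True # bs) @ ys))"
    by simp (rule E_tensR, use 2 in simp_all)
  finally show ?case .
next
  case (3 bs)
  have "eqA (length (False # bs) + length ys) (count_list (False # bs) True + count_list ys True)
    (Tens (canon (False # bs)) (canon ys)) (Tens (Gen Discard) (Tens (canon bs) (canon ys)))"
    by simp (rule E_tassoc, simp_all)
  also have "eqA (length (False # bs) + length ys) (count_list (False # bs) True + count_list ys True)
     \<dots> (canon ((False # bs) @ ys))"
    by simp (rule E_tensR, use 3 in simp_all)
  finally show ?case .
qed

lemma canon_comp: "length ys = count_list xs True \<Longrightarrow>
  eqA (length xs) (count_list ys True) (Comp (canon xs) (canon ys)) (canon (mcomp xs ys))"
proof (induction xs ys rule: mcomp.induct)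
  case (1 ys) then show ?case by simp (rule E_idl, simp_all)
next
  case (2 xs ys)
  have "eqA (length (False # xs)) (count_list ys True) (Comp (canon (False # xs)) (canon ys))
     (Comp (canon (False # xs)) (Tens (Id 0) (canon ys)))"
    by (rule E_compR, rule E_sym, rule E_tul) (use 2 in simp_all)
  also have "eqA (length (False # xs)) (count_list ys True) \<dots>
     (Tens (Comp (Gen Discard) (Id 0)) (Comp (canon xs) (canon ys)))"
    by simp (rule E_inter, use 2 in simp_all)
  also have "eqA (length (False # xs)) (count_list ys True) \<dots> (canon (mcomp (False # xs) ys))"
    using 2 apply simp apply (rule E_tens)
      apply (rule E_idr; simp)
     apply (rule E_ix, rule 2(1)) by simp_all
  finally show ?case .
next
  case (3 xs) then show ?case by simp
next
  case (4 xs y ys)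
  define G where "G = (if y then Id 1 else Gen Discard)"
  have cy: "canon (y # ys) = Tens G (canon ys)" by (cases y) (auto simp: G_def)
  have G: "wt G" "dom G = 1" "cod G = (if y then 1 else 0)" by (auto simp: G_def)
  have "eqA (length (True # xs)) (count_list (y#ys) True) (Comp (canon (True # xs)) (canon (y#ys)))
     (Tens (Comp (Id 1) G) (Comp (canon xs) (canon ys)))"
    unfolding cy by (simp only: canon.simps) (rule E_inter, use 4 G in simp_all)
  also have "eqA (length (True # xs)) (count_list (y#ys) True) \<dots> (Tens G (canon (mcomp xs ys)))"
    apply (rule E_tens)
      apply (rule E_idl; use G in simp)
     apply (rule E_ix, rule 4(1)) using 4 G by simp_all
  also have "Tens G (canon (mcomp xs ys)) = canon (mcomp (True # xs) (y#ys))"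
    by (cases y) (auto simp: G_def)
  finally show ?case .
qed

lemma canon_id: "eqA n n (Id n) (canon (replicate n True))"
proof (induction n)
  case 0 then show ?case by simp (rule E_refl, simp_all)
next
  case (Suc n)
  have "eqA (Suc n) (Suc n) (Id (Suc n)) (Tens (Id 1) (Id n))"
    by (rule E_sym, rule E_tid) simp_all
  also have "eqA (Suc n) (Suc n) \<dots> (canon (replicate (Suc n) True))"
    by simp (rule E_tensR, use Suc in simp_all)
  finally show ?case .
qed

lemma mask_canon: "ismask f \<Longrightarrow> wt f \<Longrightarrow> eqA (dom f) (cod f) f (canon (msem f))"
proof (induction f)
  case (Gen g) then show ?case by simp (rule E_sym, rule E_tur, simp_all)
next
  case (Id n) then show ?case using canon_id by simp
next
  case (Sym m n) then show ?case by simp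
next
  case (Comp f g)
  then have pf: "length (msem f) = dom f" "count_list (msem f) True = cod f"
    and pg: "length (msem g) = dom g" "count_list (msem g) True = cod g" using msem_props by auto
  have "eqA (dom (Comp f g)) (cod (Comp f g)) (Comp f g) (Comp (canon (msem f)) (canon (msem g)))"
    using Comp by simp (rule E_comp, simp_all)
  also have "eqA (dom (Comp f g)) (cod (Comp f g)) \<dots> (canon (msem (Comp f g)))"
    using canon_comp[of "msem g" "msem f"] pf pg Comp by simp
  finally show ?case .
next
  case (Tens f g)
  then have pf: "length (msem f) = dom f" "count_list (msem f) True = cod f"
    and pg: "length (msem g) = dom g" "count_list (msem g) True = cod g" using msem_props by auto
  have "eqA (dom (Tens f g)) (cod (Tens f g)) (Tens f g) (Tens (canon (msem f)) (canon (msem g)))"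
    using Tens by simp (rule E_tens, simp_all)
  also have "eqA (dom (Tens f g)) (cod (Tens f g)) \<dots> (canon (msem (Tens f g)))"
    using canon_app[of "msem f" "msem g"] pf pg by simp
  finally show ?case .
qed

lemma mask_eq: "ismask f \<Longrightarrow> ismask g \<Longrightarrow> wt f \<Longrightarrow> wt g \<Longrightarrow> msem f = msem g \<Longrightarrow>
   a = dom f \<Longrightarrow> b = cod f \<Longrightarrow> eqA a b f g"
proof -
  assume h: "ismask f" "ismask g" "wt f" "wt g" "msem f = msem g" "a = dom f" "b = cod f"
  then have "dom f = dom g" "cod f = cod g" using msem_props by metis+
  then show ?thesis using mask_canon[of f] mask_canon[of g] h
    by (metis eqA.sym eqA.trans)
qed

lemma ismask_dn[simp]: "ismask (discard_n n)" by (induction n) auto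
lemma msem_dn[simp]: "msem (discard_n n) = replicate n False" by (induction n) auto



definition pair :: "nat \<Rightarrow> circ \<Rightarrow> circ \<Rightarrow> circ" where
  "pair a f g = Comp (copy_n a) (Tens f g)"
definition proj :: "nat \<Rightarrow> nat \<Rightarrow> circ" where
  "proj a k = Tens (Tens (discard_n k) (Id 1)) (discard_n (a - Suc k))"
definition p1 :: "nat \<Rightarrow> nat \<Rightarrow> circ" where "p1 b c = Tens (Id b) (discard_n c)"
definition p2 :: "nat \<Rightarrow> nat \<Rightarrow> circ" where "p2 b c = Tens (discard_n b) (Id c)"

lemma pair_simps[simp]: "wt (pair a f g) = (wt f \<and> wt g \<and> dom f + dom g = a + a)"
  "dom (pair a f g) = a" "cod (pair a f g) = cod f + cod g"
  by (auto simp: pair_def)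
lemma proj_simps[simp]: "wt (proj a k)" "k < a \<Longrightarrow> dom (proj a k) = a" "cod (proj a k) = 1"
  "ismask (proj a k)" "msem (proj a k) = replicate k False @ True # replicate (a - Suc k) False"
  by (auto simp: proj_def)
lemma p1_simps[simp]: "wt (p1 b c)" "dom (p1 b c) = b + c" "cod (p1 b c) = b" "ismask (p1 b c)"
  "msem (p1 b c) = replicate b True @ replicate c False"
  by (auto simp: p1_def)
lemma p2_simps[simp]: "wt (p2 b c)" "dom (p2 b c) = b + c" "cod (p2 b c) = c" "ismask (p2 b c)"
  "msem (p2 b c) = replicate b False @ replicate c True"
  by (auto simp: p2_def)

lemma mcomp_repF[simp]: "mcomp (replicate n False @ xs) ys = replicate n False @ mcomp xs ys"
  by (induction n) auto
lemma mcomp_repF'[simp]: "mcomp (replicate n False) ys = replicate n False"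
  using mcomp_repF[of n "[]" ys] by simp
lemma mcomp_repT[simp]: "n \<le> length ys \<Longrightarrow> mcomp (replicate n True @ xs) ys = take n ys @ mcomp xs (drop n ys)"
proof (induction n arbitrary: ys)
  case (Suc n) then show ?case by (cases ys) auto
qed simp
lemma mcomp_repT'[simp]: "n = length ys \<Longrightarrow> mcomp (replicate n True) ys = ys"
  using mcomp_repT[of n ys "[]"] by simp
lemma mcomp_Nil2[simp]: "mcomp xs [] = xs"
  by (induction xs "[]::bool list" rule: mcomp.induct) auto

lemma rep_app_rep[simp]: "replicate m x @ replicate n x = replicate (m + n) x"
  by (simp add: replicate_add)
lemma rep_app_rep'[simp]: "replicate m x @ replicate n x @ ys = replicate (m + n) x @ ys"
  by (metis append_assoc rep_app_rep)

lemma copy_runit: "eqA 1 1 (Comp (Gen Copy) (Tens (Id 1) (Gen Discard))) (Id 1)"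
proof -
  have "eqA 1 1 (Comp (Gen Copy) (Tens (Id 1) (Gen Discard))) (Comp (Comp (Gen Copy) \<sigma>) (Tens (Id 1) (Gen Discard)))"
    by (rule E_compL, rule E_sym, rule eqA.copy_comm) simp_all
  also have "eqA 1 1 \<dots> (Comp (Gen Copy) (Comp \<sigma> (Tens (Id 1) (Gen Discard))))"
    by (rule E_assoc) simp_all
  also have "eqA 1 1 \<dots> (Comp (Gen Copy) (Comp (Tens (Gen Discard) (Id 1)) (Sym 0 1)))"
    by (rule E_compR, rule E_symnat) simp_all
  also have "eqA 1 1 \<dots> (Comp (Gen Copy) (Tens (Gen Discard) (Id 1)))"
    by (rule E_compR, rule eqA.trans, rule E_compR, rule E_syml, simp_all, rule E_idr) simp_all
  also have "eqA 1 1 \<dots> (Id 1)" by (rule eqA.copy_unit)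
  finally show ?thesis .
qed

lemma SD1: "eqA (m + n) m (Comp (Sym m n) (Tens (discard_n n) (Id m))) (Tens (Id m) (discard_n n))"
proof -
  have "eqA (m + n) m (Comp (Sym m n) (Tens (discard_n n) (Id m))) (Comp (Tens (Id m) (discard_n n)) (Sym m 0))"
    by (rule E_symnat) simp_all
  also have "eqA (m + n) m \<dots> (Comp (Tens (Id m) (discard_n n)) (Id m))"
    by (rule E_compR, rule E_symr) simp_all
  also have "eqA (m + n) m \<dots> (Tens (Id m) (discard_n n))"
    by (rule E_idr) simp_all
  finally show ?thesis .
qed

lemma SD2: "eqA (m + n) n (Comp (Sym m n) (Tens (Id n) (discard_n m))) (Tens (discard_n m) (Id n))"
proof -
  have "eqA (m + n) n (Comp (Sym m n) (Tens (Id n) (discard_n m))) (Comp (Tens (discard_n m) (Id n)) (Sym 0 n))"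
    by (rule E_symnat) simp_all
  also have "eqA (m + n) n \<dots> (Comp (Tens (discard_n m) (Id n)) (Id n))"
    by (rule E_compR, rule E_syml) simp_all
  also have "eqA (m + n) n \<dots> (Tens (discard_n m) (Id n))"
    by (rule E_idr) simp_all
  finally show ?thesis .
qed

lemma SD3: "eqA (m + n) 0 (Comp (Sym m n) (Tens (discard_n n) (discard_n m))) (Tens (discard_n m) (discard_n n))"
proof -
  have "eqA (m + n) 0 (Comp (Sym m n) (Tens (discard_n n) (discard_n m))) (Comp (Tens (discard_n m) (discard_n n)) (Sym 0 0))"
    by (rule E_symnat) simp_all
  also have "eqA (m + n) 0 \<dots> (Comp (Tens (discard_n m) (discard_n n)) (Id 0))"
    by (rule E_compR, rule E_symr) simp_all
  also have "eqA (m + n) 0 \<dots> (Tens (discard_n m) (discard_n n))"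
    by (rule E_idr) simp_all
  finally show ?thesis .
qed

text \<open>Generic step: after the shuffle of copy_n, a mask of block form.\<close>
lemma sh_step:
  assumes X: "wt X" "dom X = 1" and Y: "wt Y" "dom Y = n + 1" and Z: "wt Z" "dom Z = n"
  and Y': "eqA (1 + n) (cod Y) (Comp (Sym 1 n) Y) Y'"
  shows "eqA (2 + (n + n)) (cod X + cod Y + cod Z)
     (Comp (Tens (Tens (Id 1) (Sym 1 n)) (Id n)) (Tens (Tens X Y) Z))
     (Tens (Tens (Comp (Id 1) X) Y') (Comp (Id n) Z))"
proof -
  have w: "wt Y'" "dom Y' = 1 + n" "cod Y' = cod Y" using eqA_wt[OF Y'] by auto
  have "eqA (2 + (n + n)) (cod X + cod Y + cod Z)
     (Comp (Tens (Tens (Id 1) (Sym 1 n)) (Id n)) (Tens (Tens X Y) Z))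
     (Tens (Comp (Tens (Id 1) (Sym 1 n)) (Tens X Y)) (Comp (Id n) Z))"
    by (rule E_inter) (use X Y Z in simp_all)
  also have "eqA (2 + (n + n)) (cod X + cod Y + cod Z) \<dots>
     (Tens (Tens (Comp (Id 1) X) (Comp (Sym 1 n) Y)) (Comp (Id n) Z))"
    by (rule E_tensL, rule E_inter) (use X Y Z in simp_all)
  also have "eqA (2 + (n + n)) (cod X + cod Y + cod Z) \<dots>
     (Tens (Tens (Comp (Id 1) X) Y') (Comp (Id n) Z))"
    by (rule E_tensL, rule E_tensR) (use X Y Z Y' in simp_all)
  finally show ?thesis .
qed

lemma copy_Suc_step:
  assumes M: "wt M" "dom M = Suc n + Suc n"
  and sh: "eqA (Suc n + Suc n) (cod M) (Comp (Tens (Tens (Id 1) (Sym 1 n)) (Id n)) M) (Tens A B)"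
  and A: "wt A" "dom A = 2" and B: "wt B" "dom B = n + n"
  and CA: "eqA 1 (cod A) (Comp (Gen Copy) A) A'" and CB: "eqA n (cod B) (Comp (copy_n n) B) B'"
  and c: "c = cod M"
  shows "eqA (Suc n) c (Comp (copy_n (Suc n)) M) (Tens A' B')"
  unfolding c
proof -
  show "eqA (Suc n) (cod M) (Comp (copy_n (Suc n)) M) (Tens A' B')"
  proof -
  have cm: "cod M = cod A + cod B" using eqA_wt[OF sh] by simp
  have "eqA (Suc n) (cod M) (Comp (copy_n (Suc n)) M)
     (Comp (Tens (Gen Copy) (copy_n n)) (Comp (Tens (Tens (Id 1) (Sym 1 n)) (Id n)) M))"
    by simp (rule E_assoc, use M in simp_all)
  also have "eqA (Suc n) (cod M) \<dots> (Comp (Tens (Gen Copy) (copy_n n)) (Tens A B))"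
    by (rule E_compR) (use sh in simp_all)
  also have "eqA (Suc n) (cod M) \<dots> (Tens (Comp (Gen Copy) A) (Comp (copy_n n) B))"
    by (rule E_inter) (use A B cm in simp_all)
  also have "eqA (Suc n) (cod M) \<dots> (Tens A' B')"
    by (rule E_tens) (use CA CB cm eqA_wt[OF CA] eqA_wt[OF CB] in simp_all)
  finally show ?thesis .
  qed
qed

lemma counit_l: "eqA n n (Comp (copy_n n) (Tens (discard_n n) (Id n))) (Id n)"
proof (induction n)
  case 0 then show ?case by (rule mask_eq) simp_all
next
  case (Suc n)
  have "eqA (Suc n) (Suc n) (Comp (copy_n (Suc n)) (Tens (discard_n (Suc n)) (Id (Suc n))))
     (Tens (Id 1) (Id n))"
  proof (rule copy_Suc_step)
    show "eqA (Suc n + Suc n) (cod (Tens (discard_n (Suc n)) (Id (Suc n))))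
      (Comp (Tens (Tens (Id 1) (Sym 1 n)) (Id n)) (Tens (discard_n (Suc n)) (Id (Suc n))))
      (Tens (Tens (Gen Discard) (Id 1)) (Tens (discard_n n) (Id n)))"
    proof -
      have "eqA (Suc n + Suc n) (Suc n)
        (Comp (Tens (Tens (Id 1) (Sym 1 n)) (Id n)) (Tens (discard_n (Suc n)) (Id (Suc n))))
        (Comp (Tens (Tens (Id 1) (Sym 1 n)) (Id n)) (Tens (Tens (Gen Discard) (Tens (discard_n n) (Id 1))) (Id n)))"
        by (rule E_compR, rule mask_eq) simp_all
      also have "eqA (Suc n + Suc n) (Suc n) \<dots>
         (Tens (Tens (Comp (Id 1) (Gen Discard)) (Tens (Id 1) (discard_n n))) (Comp (Id n) (Id n)))"
        using sh_step[of "Gen Discard" "Tens (discard_n n) (Id 1)" n "Id n" "Tens (Id 1) (discard_n n)"]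
          SD1[of 1 n] by simp
      also have "eqA (Suc n + Suc n) (Suc n) \<dots> (Tens (Tens (Gen Discard) (Id 1)) (Tens (discard_n n) (Id n)))"
        by (rule mask_eq) simp_all
      finally show ?thesis by simp
    qed
    show "eqA 1 (cod (Tens (Gen Discard) (Id 1))) (Comp (Gen Copy) (Tens (Gen Discard) (Id 1))) (Id 1)"
      using eqA.copy_unit by simp
    show "eqA n (cod (Tens (discard_n n) (Id n))) (Comp (copy_n n) (Tens (discard_n n) (Id n))) (Id n)"
      using Suc by simp
  qed simp_all
  also have "eqA (Suc n) (Suc n) \<dots> (Id (Suc n))" by (rule E_tid) simp_all
  finally show ?case .
qed


lemma counit_r: "eqA n n (Comp (copy_n n) (Tens (Id n) (discard_n n))) (Id n)"
proof (induction n)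
  case 0 then show ?case by (rule mask_eq) simp_all
next
  case (Suc n)
  have "eqA (Suc n) (Suc n) (Comp (copy_n (Suc n)) (Tens (Id (Suc n)) (discard_n (Suc n))))
     (Tens (Id 1) (Id n))"
  proof (rule copy_Suc_step)
    show "eqA (Suc n + Suc n) (cod (Tens (Id (Suc n)) (discard_n (Suc n))))
      (Comp (Tens (Tens (Id 1) (Sym 1 n)) (Id n)) (Tens (Id (Suc n)) (discard_n (Suc n))))
      (Tens (Tens (Id 1) (Gen Discard)) (Tens (Id n) (discard_n n)))"
    proof -
      have "eqA (Suc n + Suc n) (Suc n)
        (Comp (Tens (Tens (Id 1) (Sym 1 n)) (Id n)) (Tens (Id (Suc n)) (discard_n (Suc n))))
        (Comp (Tens (Tens (Id 1) (Sym 1 n)) (Id n)) (Tens (Tens (Id 1) (Tens (Id n) (discard_n 1))) (discard_n n)))"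
        by (rule E_compR, rule mask_eq) simp_all
      also have "eqA (Suc n + Suc n) (Suc n) \<dots>
         (Tens (Tens (Comp (Id 1) (Id 1)) (Tens (discard_n 1) (Id n))) (Comp (Id n) (discard_n n)))"
        using sh_step[of "Id 1" "Tens (Id n) (discard_n 1)" n "discard_n n" "Tens (discard_n 1) (Id n)"]
          SD2[of 1 n] by simp
      also have "eqA (Suc n + Suc n) (Suc n) \<dots> (Tens (Tens (Id 1) (Gen Discard)) (Tens (Id n) (discard_n n)))"
        by (rule mask_eq) simp_all
      finally show ?thesis by simp
    qed
    show "eqA 1 (cod (Tens (Id 1) (Gen Discard))) (Comp (Gen Copy) (Tens (Id 1) (Gen Discard))) (Id 1)"
      using copy_runit by simp
    show "eqA n (cod (Tens (Id n) (discard_n n))) (Comp (copy_n n) (Tens (Id n) (discard_n n))) (Id n)"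
      using Suc by simp
  qed simp_all
  also have "eqA (Suc n) (Suc n) \<dots> (Id (Suc n))" by (rule E_tid) simp_all
  finally show ?case .
qed

lemma eta1: "eqA (Suc n) (Suc n) (pair (Suc n) (proj (Suc n) 0) (p2 1 n)) (Id (Suc n))"
proof -
  have "eqA (Suc n) (Suc n) (pair (Suc n) (proj (Suc n) 0) (p2 1 n)) (Tens (Id 1) (Id n))"
    unfolding pair_def
  proof (rule copy_Suc_step)
    show "eqA (Suc n + Suc n) (cod (Tens (proj (Suc n) 0) (p2 1 n)))
      (Comp (Tens (Tens (Id 1) (Sym 1 n)) (Id n)) (Tens (proj (Suc n) 0) (p2 1 n)))
      (Tens (Tens (Id 1) (Gen Discard)) (Tens (discard_n n) (Id n)))"
    proof -
      have "eqA (Suc n + Suc n) (Suc n)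
        (Comp (Tens (Tens (Id 1) (Sym 1 n)) (Id n)) (Tens (proj (Suc n) 0) (p2 1 n)))
        (Comp (Tens (Tens (Id 1) (Sym 1 n)) (Id n)) (Tens (Tens (Id 1) (Tens (discard_n n) (discard_n 1))) (Id n)))"
        by (rule E_compR, rule mask_eq) simp_all
      also have "eqA (Suc n + Suc n) (Suc n) \<dots>
         (Tens (Tens (Comp (Id 1) (Id 1)) (Tens (discard_n 1) (discard_n n))) (Comp (Id n) (Id n)))"
        using sh_step[of "Id 1" "Tens (discard_n n) (discard_n 1)" n "Id n" "Tens (discard_n 1) (discard_n n)"]
          SD3[of 1 n] by simp
      also have "eqA (Suc n + Suc n) (Suc n) \<dots> (Tens (Tens (Id 1) (Gen Discard)) (Tens (discard_n n) (Id n)))"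
        by (rule mask_eq) simp_all
      finally show ?thesis by simp
    qed
    show "eqA 1 (cod (Tens (Id 1) (Gen Discard))) (Comp (Gen Copy) (Tens (Id 1) (Gen Discard))) (Id 1)"
      using copy_runit by simp
    show "eqA n (cod (Tens (discard_n n) (Id n))) (Comp (copy_n n) (Tens (discard_n n) (Id n))) (Id n)"
      using counit_l by simp
  qed simp_all
  also have "eqA (Suc n) (Suc n) \<dots> (Id (Suc n))" by (rule E_tid) simp_all
  finally show ?thesis .
qed

lemma pair_nat0: assumes "wt h" "wt f" "wt g" "cod h = a" "dom f = a" "dom g = a"
  shows "eqA (dom h) (cod f + cod g) (Comp h (pair a f g)) (pair (dom h) (Comp h f) (Comp h g))"
proof -
  have "eqA (dom h) (cod f + cod g) (Comp h (pair a f g)) (Comp (Comp h (copy_n a)) (Tens f g))"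
    unfolding pair_def by (rule E_sym, rule E_assoc) (use assms in simp_all)
  also have "eqA (dom h) (cod f + cod g) \<dots> (Comp (Comp (copy_n (dom h)) (Tens h h)) (Tens f g))"
    by (rule E_compL, rule E_copynat) (use assms in simp_all)
  also have "eqA (dom h) (cod f + cod g) \<dots> (Comp (copy_n (dom h)) (Comp (Tens h h) (Tens f g)))"
    by (rule E_assoc) (use assms in simp_all)
  also have "eqA (dom h) (cod f + cod g) \<dots> (pair (dom h) (Comp h f) (Comp h g))"
    unfolding pair_def by (rule E_compR, rule E_inter) (use assms in simp_all)
  finally show ?thesis .
qed

lemma pair_nat: "wt h \<Longrightarrow> wt f \<Longrightarrow> wt g \<Longrightarrow> cod h = a \<Longrightarrow> dom f = a \<Longrightarrow> dom g = a \<Longrightarrow>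
  a' = dom h \<Longrightarrow> d = cod f + cod g \<Longrightarrow> eqA a' d (Comp h (pair a f g)) (pair a' (Comp h f) (Comp h g))"
  using pair_nat0 by simp

lemma pair_post: assumes "wt f" "wt g" "wt f'" "wt g'" "dom f = a" "dom g = a" "cod f = dom f'" "cod g = dom g'"
  and d: "d = cod f' + cod g'"
  shows "eqA a d (Comp (pair a f g) (Tens f' g')) (pair a (Comp f f') (Comp g g'))"
  unfolding d
proof -
  have "eqA a (cod f' + cod g') (Comp (pair a f g) (Tens f' g')) (Comp (copy_n a) (Comp (Tens f g) (Tens f' g')))"
    unfolding pair_def by (rule E_assoc) (use assms in simp_all)
  also have "eqA a (cod f' + cod g') \<dots> (pair a (Comp f f') (Comp g g'))"
    unfolding pair_def by (rule E_compR, rule E_inter) (use assms in simp_all)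
  finally show "eqA a (cod f' + cod g') (Comp (pair a f g) (Tens f' g')) (pair a (Comp f f') (Comp g g'))" .
qed

lemma pair_cong: "eqA a b f f' \<Longrightarrow> eqA a c g g' \<Longrightarrow> d = b + c \<Longrightarrow> eqA a d (pair a f g) (pair a f' g')"
  unfolding pair_def using eqA_wt[of a b f f'] eqA_wt[of a c g g']
  by (intro E_compR E_tens) simp_all

lemma beta1: assumes "wt f" "wt g" "dom f = a" "dom g = a" "cod f = b" "cod g = c"
  shows "eqA a b (Comp (pair a f g) (p1 b c)) f"
proof -
  have "eqA a b (Comp (pair a f g) (p1 b c)) (pair a (Comp f (Id b)) (Comp g (discard_n c)))"
    unfolding p1_def by (rule pair_post) (use assms in simp_all)
  also have "eqA a b \<dots> (pair a f (discard_n a))"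
    by (rule pair_cong, rule E_idr, simp_all add: assms, rule E_discnat) (simp_all add: assms)
  also have "eqA a b \<dots> (Comp (copy_n a) (Tens (Comp (Id a) f) (Comp (discard_n a) (Id 0))))"
    unfolding pair_def using assms
    by (intro E_compR E_tens E_sym[OF E_idl] E_sym[OF E_idr]) simp_all
  also have "eqA a b \<dots> (Comp (copy_n a) (Comp (Tens (Id a) (discard_n a)) (Tens f (Id 0))))"
    by (rule E_compR, rule E_sym, rule E_inter) (use assms in simp_all)
  also have "eqA a b \<dots> (Comp (Comp (copy_n a) (Tens (Id a) (discard_n a))) (Tens f (Id 0)))"
    by (rule E_sym, rule E_assoc) (use assms in simp_all)
  also have "eqA a b \<dots> (Comp (Id a) (Tens f (Id 0)))"
    by (rule E_compL, rule counit_r) (use assms in simp_all)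
  also have "eqA a b \<dots> f"
    by (rule eqA.trans, rule E_idl, simp_all add: assms, rule E_tur) (simp_all add: assms)
  finally show ?thesis .
qed

lemma beta2: assumes "wt f" "wt g" "dom f = a" "dom g = a" "cod f = b" "cod g = c"
  shows "eqA a c (Comp (pair a f g) (p2 b c)) g"
proof -
  have "eqA a c (Comp (pair a f g) (p2 b c)) (pair a (Comp f (discard_n b)) (Comp g (Id c)))"
    unfolding p2_def by (rule pair_post) (use assms in simp_all)
  also have "eqA a c \<dots> (pair a (discard_n a) g)"
    by (rule pair_cong, rule E_discnat, simp_all add: assms, rule E_idr) (simp_all add: assms)
  also have "eqA a c \<dots> (Comp (copy_n a) (Tens (Comp (discard_n a) (Id 0)) (Comp (Id a) g)))"
    unfolding pair_def using assms
    by (intro E_compR E_tens E_sym[OF E_idl] E_sym[OF E_idr]) simp_all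
  also have "eqA a c \<dots> (Comp (copy_n a) (Comp (Tens (discard_n a) (Id a)) (Tens (Id 0) g)))"
    by (rule E_compR, rule E_sym, rule E_inter) (use assms in simp_all)
  also have "eqA a c \<dots> (Comp (Comp (copy_n a) (Tens (discard_n a) (Id a))) (Tens (Id 0) g))"
    by (rule E_sym, rule E_assoc) (use assms in simp_all)
  also have "eqA a c \<dots> (Comp (Id a) (Tens (Id 0) g))"
    by (rule E_compL, rule counit_l) (use assms in simp_all)
  also have "eqA a c \<dots> g"
    by (rule eqA.trans, rule E_idl, simp_all add: assms, rule E_tul) (simp_all add: assms)
  finally show ?thesis .
qed

lemma PR1: "k < b \<Longrightarrow> eqA (b + c) 1 (proj (b + c) k) (Comp (p1 b c) (proj b k))"
  by (rule mask_eq) (simp_all add: min_def)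

lemma PR2: "k < c \<Longrightarrow> eqA (b + c) 1 (proj (b + c) (b + k)) (Comp (p2 b c) (proj c k))"
  by (rule mask_eq) (simp_all add: min_def)


lemma betaP1: assumes "wt f" "wt g" "dom f = a" "dom g = a" "cod f = b" "cod g = c" "k < b"
  shows "eqA a 1 (Comp (pair a f g) (proj (b + c) k)) (Comp f (proj b k))"
proof -
  have "eqA a 1 (Comp (pair a f g) (proj (b + c) k)) (Comp (pair a f g) (Comp (p1 b c) (proj b k)))"
    by (rule E_compR, rule PR1) (use assms in simp_all)
  also have "eqA a 1 \<dots> (Comp (Comp (pair a f g) (p1 b c)) (proj b k))"
    by (rule E_sym, rule E_assoc) (use assms in simp_all)
  also have "eqA a 1 \<dots> (Comp f (proj b k))"
    by (rule E_compL, rule beta1) (use assms in simp_all)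
  finally show ?thesis .
qed

lemma betaP2: assumes "wt f" "wt g" "dom f = a" "dom g = a" "cod f = b" "cod g = c" "k < c"
  shows "eqA a 1 (Comp (pair a f g) (proj (b + c) (b + k))) (Comp g (proj c k))"
proof -
  have "eqA a 1 (Comp (pair a f g) (proj (b + c) (b + k))) (Comp (pair a f g) (Comp (p2 b c) (proj c k)))"
    by (rule E_compR, rule PR2) (use assms in simp_all)
  also have "eqA a 1 \<dots> (Comp (Comp (pair a f g) (p2 b c)) (proj c k))"
    by (rule E_sym, rule E_assoc) (use assms in simp_all)
  also have "eqA a 1 \<dots> (Comp g (proj c k))"
    by (rule E_compL, rule beta2) (use assms in simp_all)
  finally show ?thesis .
qed

lemma decomp: assumes "wt h" "dom h = a" "cod h = Suc b"
  shows "eqA a (Suc b) h (pair a (Comp h (proj (Suc b) 0)) (Comp h (p2 1 b)))"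
proof -
  have "eqA a (Suc b) h (Comp h (Id (Suc b)))" by (rule E_sym, rule E_idr) (use assms in simp_all)
  also have "eqA a (Suc b) \<dots> (Comp h (pair (Suc b) (proj (Suc b) 0) (p2 1 b)))"
    by (rule E_compR, rule E_sym, rule eta1) (use assms in simp_all)
  also have "eqA a (Suc b) \<dots> (pair a (Comp h (proj (Suc b) 0)) (Comp h (p2 1 b)))"
    by (rule pair_nat) (use assms in simp_all)
  finally show ?thesis .
qed

lemma EXT: "wt f \<Longrightarrow> wt g \<Longrightarrow> dom f = a \<Longrightarrow> dom g = a \<Longrightarrow> cod f = b \<Longrightarrow> cod g = b \<Longrightarrow>
  (\<And>k. k < b \<Longrightarrow> eqA a 1 (Comp f (proj b k)) (Comp g (proj b k))) \<Longrightarrow> eqA a b f g"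
proof (induction b arbitrary: f g)
  case 0
  have "eqA a 0 f (Comp f (discard_n 0))" by simp (rule E_sym, rule E_idr, use 0 in simp_all)
  also have "eqA a 0 \<dots> (discard_n a)" by (rule E_discnat) (use 0 in simp_all)
  also have "eqA a 0 \<dots> (Comp g (discard_n 0))" by (rule E_sym, rule E_discnat) (use 0 in simp_all)
  also have "eqA a 0 \<dots> g" by simp (rule E_idr, use 0 in simp_all)
  finally show ?case .
next
  case (Suc b)
  have "eqA a (Suc b) f (pair a (Comp f (proj (Suc b) 0)) (Comp f (p2 1 b)))"
    by (rule decomp) (use Suc in simp_all)
  also have "eqA a (Suc b) \<dots> (pair a (Comp g (proj (Suc b) 0)) (Comp g (p2 1 b)))"
  proof (rule pair_cong)
    show "eqA a 1 (Comp f (proj (Suc b) 0)) (Comp g (proj (Suc b) 0))" using Suc.prems by simp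
    show "eqA a b (Comp f (p2 1 b)) (Comp g (p2 1 b))"
    proof (rule Suc.IH)
      fix k assume k: "k < b"
      have pr: "eqA (Suc b) 1 (proj (Suc b) (Suc k)) (Comp (p2 1 b) (proj b k))" using PR2[of k b 1] k by simp
      have "eqA a 1 (Comp (Comp f (p2 1 b)) (proj b k)) (Comp f (Comp (p2 1 b) (proj b k)))"
        by (rule E_assoc) (use Suc k in simp_all)
      also have "eqA a 1 \<dots> (Comp f (proj (Suc b) (Suc k)))"
        by (rule E_compR, rule E_sym, rule pr) (use Suc k in simp_all)
      also have "eqA a 1 \<dots> (Comp g (proj (Suc b) (Suc k)))" using Suc.prems k by simp
      also have "eqA a 1 \<dots> (Comp g (Comp (p2 1 b) (proj b k)))"
        by (rule E_compR, rule pr) (use Suc k in simp_all)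
      also have "eqA a 1 \<dots> (Comp (Comp g (p2 1 b)) (proj b k))"
        by (rule E_sym, rule E_assoc) (use Suc k in simp_all)
      finally show "eqA a 1 (Comp (Comp f (p2 1 b)) (proj b k)) (Comp (Comp g (p2 1 b)) (proj b k))" .
    qed (use Suc.prems in simp_all)
  qed simp
  also have "eqA a (Suc b) \<dots> g"
    by (rule E_sym, rule decomp) (use Suc in simp_all)
  finally show ?case .
qed





datatype tm = V nat | Zr | On | Pl tm tm | Ml tm tm

fun semg :: "'a \<Rightarrow> 'a \<Rightarrow> ('a \<Rightarrow> 'a \<Rightarrow> 'a) \<Rightarrow> ('a \<Rightarrow> 'a \<Rightarrow> 'a) \<Rightarrow> circ \<Rightarrow> 'a list \<Rightarrow> 'a list" where
  "semg z u p q (Gen g) xs = (case g of Discard \<Rightarrow> [] | Copy \<Rightarrow> [xs ! 0, xs ! 0] | Zero \<Rightarrow> [z]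
      | Add \<Rightarrow> [p (xs ! 0) (xs ! 1)] | One \<Rightarrow> [u] | And \<Rightarrow> [q (xs ! 0) (xs ! 1)])"
| "semg z u p q (Id n) xs = xs"
| "semg z u p q (Sym m n) xs = drop m xs @ take m xs"
| "semg z u p q (Comp f g) xs = semg z u p q g (semg z u p q f xs)"
| "semg z u p q (Tens f g) xs = semg z u p q f (take (dom f) xs) @ semg z u p q g (drop (dom f) xs)"

lemma semg_len: "wt f \<Longrightarrow> length xs = dom f \<Longrightarrow> length (semg z u p q f xs) = cod f"
  by (induction f arbitrary: xs) (auto split: gen.splits)

lemma semg_hom:
  assumes hz: "h z = z'" and ho: "h u = u'" and hp: "\<And>a b. h (p a b) = p' (h a) (h b)"
    and hq: "\<And>a b. h (q a b) = q' (h a) (h b)"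
  shows "wt f \<Longrightarrow> length xs = dom f \<Longrightarrow> semg z' u' p' q' f (map h xs) = map h (semg z u p q f xs)"
proof (induction f arbitrary: xs)
  case (Gen g) then show ?case
    by (cases g) (auto simp: hz ho hp hq)
next
  case (Comp f g) then show ?case by (simp add: semg_len)
next
  case (Tens f g) then show ?case by (simp add: take_map drop_map)
qed (auto simp: take_map drop_map)

abbreviation sem :: "circ \<Rightarrow> tm list \<Rightarrow> tm list" where "sem \<equiv> semg Zr On Pl Ml"

fun subst :: "tm list \<Rightarrow> tm \<Rightarrow> tm" where
  "subst H (V k) = (if k < length H then H ! k else Zr)"
| "subst H Zr = Zr" | "subst H On = On"
| "subst H (Pl s t) = Pl (subst H s) (subst H t)"
| "subst H (Ml s t) = Ml (subst H s) (subst H t)"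

definition vars :: "nat \<Rightarrow> tm list" where "vars n = map V [0..<n]"
lemma vars_simps[simp]: "length (vars n) = n" "k < n \<Longrightarrow> vars n ! k = V k"
  by (auto simp: vars_def)
lemma subst_vars[simp]: "map (subst H) (vars (length H)) = H"
  by (rule nth_equalityI) (auto simp: vars_def)

lemma sem_subst: "wt f \<Longrightarrow> length xs = dom f \<Longrightarrow> map (subst H) (sem f xs) = sem f (map (subst H) xs)"
  by (rule semg_hom[symmetric]) auto

lemma sem_inst: "wt f \<Longrightarrow> length xs = dom f \<Longrightarrow> sem f xs = map (subst xs) (sem f (vars (dom f)))"
  using sem_subst[of f "vars (dom f)" xs] subst_vars[of xs] by simp

fun K :: "nat \<Rightarrow> tm \<Rightarrow> circ" where
  "K a (V k) = (if k < a then proj a k else Comp (discard_n a) (Gen Zero))"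
| "K a Zr = Comp (discard_n a) (Gen Zero)"
| "K a On = Comp (discard_n a) (Gen One)"
| "K a (Pl s t) = Comp (pair a (K a s) (K a t)) (Gen Add)"
| "K a (Ml s t) = Comp (pair a (K a s) (K a t)) (Gen And)"

lemma K_simps[simp]: "wt (K a t)" "dom (K a t) = a" "cod (K a t) = 1"
  by (induction t) auto

lemma SL: assumes h: "wt h" "dom h = a" "cod h = b" and H: "length H = b"
  and comp: "\<And>k. k < b \<Longrightarrow> eqA a 1 (Comp h (proj b k)) (K a (H ! k))"
  shows "eqA a 1 (Comp h (K b t)) (K a (subst H t))"
proof (induction t)
  case (V k)
  show ?case
  proof (cases "k < b")
    case True then show ?thesis using comp H by simp
  next
    case False
    have "eqA a 1 (Comp h (Comp (discard_n b) (Gen Zero))) (Comp (Comp h (discard_n b)) (Gen Zero))"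
      by (rule E_sym, rule E_assoc) (use h in simp_all)
    also have "eqA a 1 \<dots> (Comp (discard_n a) (Gen Zero))"
      by (rule E_compL, rule E_discnat) (use h in simp_all)
    finally show ?thesis using False H by simp
  qed
next
  case Zr
  have "eqA a 1 (Comp h (Comp (discard_n b) (Gen Zero))) (Comp (Comp h (discard_n b)) (Gen Zero))"
    by (rule E_sym, rule E_assoc) (use h in simp_all)
  also have "eqA a 1 \<dots> (Comp (discard_n a) (Gen Zero))"
    by (rule E_compL, rule E_discnat) (use h in simp_all)
  finally show ?case by simp
next
  case On
  have "eqA a 1 (Comp h (Comp (discard_n b) (Gen One))) (Comp (Comp h (discard_n b)) (Gen One))"
    by (rule E_sym, rule E_assoc) (use h in simp_all)
  also have "eqA a 1 \<dots> (Comp (discard_n a) (Gen One))"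
    by (rule E_compL, rule E_discnat) (use h in simp_all)
  finally show ?case by simp
next
  case (Pl s t)
  have "eqA a 1 (Comp h (Comp (pair b (K b s) (K b t)) (Gen Add))) (Comp (Comp h (pair b (K b s) (K b t))) (Gen Add))"
    by (rule E_sym, rule E_assoc) (use h in simp_all)
  also have "eqA a 1 \<dots> (Comp (pair a (Comp h (K b s)) (Comp h (K b t))) (Gen Add))"
    by (rule E_compL, rule pair_nat) (use h in simp_all)
  also have "eqA a 1 \<dots> (Comp (pair a (K a (subst H s)) (K a (subst H t))) (Gen Add))"
    apply (rule E_compL, rule pair_cong)
    apply (rule Pl.IH(1)) apply (rule Pl.IH(2))
    apply (simp add: eval_nat_numeral)
    apply simp_all done
  finally show ?case by simp
next
  case (Ml s t)
  have "eqA a 1 (Comp h (Comp (pair b (K b s) (K b t)) (Gen And))) (Comp (Comp h (pair b (K b s) (K b t))) (Gen And))"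
    by (rule E_sym, rule E_assoc) (use h in simp_all)
  also have "eqA a 1 \<dots> (Comp (pair a (Comp h (K b s)) (Comp h (K b t))) (Gen And))"
    by (rule E_compL, rule pair_nat) (use h in simp_all)
  also have "eqA a 1 \<dots> (Comp (pair a (K a (subst H s)) (K a (subst H t))) (Gen And))"
    apply (rule E_compL, rule pair_cong)
    apply (rule Ml.IH(1)) apply (rule Ml.IH(2))
    apply (simp add: eval_nat_numeral)
    apply simp_all done
  finally show ?case by simp
qed


lemma TP1: assumes "wt f" "wt g"
  shows "eqA (dom f + dom g) (cod f) (Comp (Tens f g) (p1 (cod f) (cod g))) (Comp (p1 (dom f) (dom g)) f)"
proof -
  have "eqA (dom f + dom g) (cod f) (Comp (Tens f g) (p1 (cod f) (cod g))) (Tens (Comp f (Id (cod f))) (Comp g (discard_n (cod g))))"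
    unfolding p1_def by (rule E_inter) (use assms in simp_all)
  also have "eqA (dom f + dom g) (cod f) \<dots> (Tens (Comp (Id (dom f)) f) (Comp (discard_n (dom g)) (Id 0)))"
    apply (rule E_tens)
       apply (rule eqA.trans, rule E_idr, simp_all add: assms, rule E_sym, rule E_idl, simp_all add: assms)
    apply (rule eqA.trans, rule E_discnat, simp_all add: assms, rule E_sym, rule E_idr) by (simp_all add: assms)
  also have "eqA (dom f + dom g) (cod f) \<dots> (Comp (p1 (dom f) (dom g)) (Tens f (Id 0)))"
    unfolding p1_def by (rule E_sym, rule E_inter) (use assms in simp_all)
  also have "eqA (dom f + dom g) (cod f) \<dots> (Comp (p1 (dom f) (dom g)) f)"
    by (rule E_compR, rule E_tur) (use assms in simp_all)
  finally show ?thesis .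
qed

lemma TP2: assumes "wt f" "wt g"
  shows "eqA (dom f + dom g) (cod g) (Comp (Tens f g) (p2 (cod f) (cod g))) (Comp (p2 (dom f) (dom g)) g)"
proof -
  have "eqA (dom f + dom g) (cod g) (Comp (Tens f g) (p2 (cod f) (cod g))) (Tens (Comp f (discard_n (cod f))) (Comp g (Id (cod g))))"
    unfolding p2_def by (rule E_inter) (use assms in simp_all)
  also have "eqA (dom f + dom g) (cod g) \<dots> (Tens (Comp (discard_n (dom f)) (Id 0)) (Comp (Id (dom g)) g))"
    apply (rule E_tens)
       apply (rule eqA.trans, rule E_discnat, simp_all add: assms, rule E_sym, rule E_idr, simp_all add: assms)
    apply (rule eqA.trans, rule E_idr, simp_all add: assms, rule E_sym, rule E_idl) by (simp_all add: assms)
  also have "eqA (dom f + dom g) (cod g) \<dots> (Comp (p2 (dom f) (dom g)) (Tens (Id 0) g))"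
    unfolding p2_def by (rule E_sym, rule E_inter) (use assms in simp_all)
  also have "eqA (dom f + dom g) (cod g) \<dots> (Comp (p2 (dom f) (dom g)) g)"
    by (rule E_compR, rule E_tul) (use assms in simp_all)
  finally show ?thesis .
qed

lemma sem_vars_len: "wt f \<Longrightarrow> length (sem f (vars (dom f))) = cod f"
  by (simp add: semg_len)

lemma subst_vars_id: "wt f \<Longrightarrow> map (subst (vars (dom f))) (sem f (vars (dom f))) = sem f (vars (dom f))"
  using sem_inst[of f "vars (dom f)"] by simp

lemma vars_add_take: "take a (vars (a + c)) = vars a"
  by (simp add: vars_def take_map)
lemma vars_add_drop: "drop a (vars (a + c)) = map V [a..<a+c]"
  by (simp add: vars_def drop_map)

lemma proj_comp_step: assumes "wt f" "dom f = a" "cod f = b" "k < b"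
  and P: "eqA b 1 (proj b k) (Comp Q Rr)" "wt Q" "wt Rr" "dom Q = b" "cod Q = dom Rr" "cod Rr = 1"
  and FQ: "eqA a (cod Q) (Comp f Q) W"
  shows "eqA a 1 (Comp f (proj b k)) (Comp W Rr)"
proof -
  have w: "wt W" "dom W = a" "cod W = cod Q" using eqA_wt[OF FQ] by auto
  have "eqA a 1 (Comp f (proj b k)) (Comp f (Comp Q Rr))" by (rule E_compR) (use assms P in simp_all)
  also have "eqA a 1 \<dots> (Comp (Comp f Q) Rr)" by (rule E_sym, rule E_assoc) (use assms P in simp_all)
  also have "eqA a 1 \<dots> (Comp W Rr)" by (rule E_compL) (use assms P FQ w in simp_all)
  finally show ?thesis .
qed

lemma eta2: "eqA 2 2 (pair 2 (proj 2 0) (p2 1 1)) (Id 2)"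
  using eta1[of 1] by (simp add: numeral_2_eq_2)

lemma CL: "wt f \<Longrightarrow> k < cod f \<Longrightarrow>
  eqA (dom f) 1 (Comp f (proj (cod f) k)) (K (dom f) (sem f (vars (dom f)) ! k))"
proof (induction f arbitrary: k)
  case (Gen g)
  show ?case
  proof (cases g)
    case Discard then show ?thesis using Gen by simp
  next
    case Copy
    then have k: "k = 0 \<or> k = 1" using Gen by auto
    have cu: "eqA 1 1 (Comp (Gen Copy) (proj 2 0)) (proj 1 0)"
    proof -
      have "eqA 1 1 (Comp (Gen Copy) (proj 2 0)) (Comp (Gen Copy) (Tens (Id 1) (Gen Discard)))"
        by (rule E_compR, rule mask_eq) simp_all
      also have "eqA 1 1 \<dots> (Id 1)" by (rule copy_runit)
      also have "eqA 1 1 \<dots> (proj 1 0)" by (rule mask_eq) simp_all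
      finally show ?thesis .
    qed
    have cu2: "eqA 1 1 (Comp (Gen Copy) (proj 2 1)) (proj 1 0)"
    proof -
      have "eqA 1 1 (Comp (Gen Copy) (proj 2 1)) (Comp (Gen Copy) (Tens (Gen Discard) (Id 1)))"
        by (rule E_compR, rule mask_eq) (simp_all add: numeral_eq_Suc)
      also have "eqA 1 1 \<dots> (Id 1)" by (rule eqA.copy_unit)
      also have "eqA 1 1 \<dots> (proj 1 0)" by (rule mask_eq) simp_all
      finally show ?thesis .
    qed
    show ?thesis using k cu cu2 Copy by auto
  next
    case Zero
    have "eqA 0 1 (Comp (Gen Zero) (proj 1 0)) (Comp (Gen Zero) (Id 1))"
      by (rule E_compR, rule mask_eq) simp_all
    also have "eqA 0 1 \<dots> (Gen Zero)" by (rule E_idr) simp_all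
    also have "eqA 0 1 \<dots> (Comp (discard_n 0) (Gen Zero))" by simp (rule E_sym, rule E_idl, simp_all)
    finally show ?thesis using Zero Gen by simp
  next
    case One
    have "eqA 0 1 (Comp (Gen One) (proj 1 0)) (Comp (Gen One) (Id 1))"
      by (rule E_compR, rule mask_eq) simp_all
    also have "eqA 0 1 \<dots> (Gen One)" by (rule E_idr) simp_all
    also have "eqA 0 1 \<dots> (Comp (discard_n 0) (Gen One))" by simp (rule E_sym, rule E_idl, simp_all)
    finally show ?thesis using One Gen by simp
  next
    case Add
    have "eqA 2 1 (Comp (Gen Add) (proj 1 0)) (Comp (Gen Add) (Id 1))"
      by (rule E_compR, rule mask_eq) simp_all
    also have "eqA 2 1 \<dots> (Gen Add)" by (rule E_idr) simp_all
    also have "eqA 2 1 \<dots> (Comp (Id 2) (Gen Add))" by (rule E_sym, rule E_idl) simp_all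
    also have "eqA 2 1 \<dots> (Comp (pair 2 (proj 2 0) (p2 1 1)) (Gen Add))"
      by (rule E_compL, rule E_sym, rule eta2) simp_all
    also have "eqA 2 1 \<dots> (Comp (pair 2 (proj 2 0) (proj 2 1)) (Gen Add))"
      by (rule E_compL, rule pair_cong, rule E_refl, simp_all, rule mask_eq) (simp_all add: numeral_eq_Suc)
    finally show ?thesis using Add Gen by (simp add: numeral_eq_Suc)
  next
    case And
    have "eqA 2 1 (Comp (Gen And) (proj 1 0)) (Comp (Gen And) (Id 1))"
      by (rule E_compR, rule mask_eq) simp_all
    also have "eqA 2 1 \<dots> (Gen And)" by (rule E_idr) simp_all
    also have "eqA 2 1 \<dots> (Comp (Id 2) (Gen And))" by (rule E_sym, rule E_idl) simp_all
    also have "eqA 2 1 \<dots> (Comp (pair 2 (proj 2 0) (p2 1 1)) (Gen And))"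
      by (rule E_compL, rule E_sym, rule eta2) simp_all
    also have "eqA 2 1 \<dots> (Comp (pair 2 (proj 2 0) (proj 2 1)) (Gen And))"
      by (rule E_compL, rule pair_cong, rule E_refl, simp_all, rule mask_eq) (simp_all add: numeral_eq_Suc)
    finally show ?thesis using And Gen by (simp add: numeral_eq_Suc)
  qed
next
  case (Id n)
  have "eqA n 1 (Comp (Id n) (proj n k)) (proj n k)" by (rule E_idl) (use Id in simp_all)
  then show ?case using Id by (simp add: vars_def)
next
  case (Sym m n)
  show ?case
  proof (cases "k < n")
    case True
    have "eqA (m + n) 1 (Comp (Sym m n) (proj (n + m) k)) (Comp (p2 m n) (proj n k))"
    proof (rule proj_comp_step)
      show "eqA (n + m) 1 (proj (n + m) k) (Comp (p1 n m) (proj n k))" by (rule PR1) (use True in simp)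
      show "eqA (m + n) (cod (p1 n m)) (Comp (Sym m n) (p1 n m)) (p2 m n)"
        using SD2[of m n] by (simp add: p1_def p2_def)
    qed (use True in simp_all)
    also have "eqA (m + n) 1 \<dots> (proj (m + n) (m + k))" by (rule E_sym, rule PR2) (use True in simp)
    finally show ?thesis using True by (simp add: vars_def nth_append)
  next
    case False
    define j where "j = k - n"
    have j: "k = n + j" "j < m" using Sym False by (simp_all add: j_def)
    have "eqA (m + n) 1 (Comp (Sym m n) (proj (n + m) (n + j))) (Comp (p1 m n) (proj m j))"
    proof (rule proj_comp_step)
      show "eqA (n + m) 1 (proj (n + m) (n + j)) (Comp (p2 n m) (proj m j))" by (rule PR2) (use j in simp)
      show "eqA (m + n) (cod (p2 n m)) (Comp (Sym m n) (p2 n m)) (p1 m n)"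
        using SD1[of m n] by (simp add: p1_def p2_def)
    qed (use j in simp_all)
    also have "eqA (m + n) 1 \<dots> (proj (m + n) j)" by (rule E_sym, rule PR1) (use j in simp)
    finally show ?thesis using j by (simp add: vars_def nth_append)
  qed
next
  case (Comp f g)
  let ?a = "dom f" and ?b = "cod f" and ?c = "cod g"
  let ?F = "sem f (vars ?a)" and ?G = "sem g (vars ?b)"
  have wf: "wt f" "wt g" "dom g = ?b" and k: "k < ?c" using Comp by auto
  have "eqA ?a 1 (Comp (Comp f g) (proj ?c k)) (Comp f (Comp g (proj ?c k)))"
    by (rule E_assoc) (use wf k in simp_all)
  also have "eqA ?a 1 \<dots> (Comp f (K ?b (?G ! k)))"
    by (rule E_compR) (use Comp.IH(2)[of k] wf k in simp_all)
  also have "eqA ?a 1 \<dots> (K ?a (subst ?F (?G ! k)))"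
    by (rule SL) (use wf Comp.IH(1) in \<open>simp_all add: semg_len\<close>)
  also have "subst ?F (?G ! k) = sem (Comp f g) (vars (dom (Comp f g))) ! k"
  proof -
    have "sem (Comp f g) (vars (dom (Comp f g))) = sem g ?F" by simp
    also have "\<dots> = map (subst ?F) ?G" using sem_inst[of g ?F] wf by (simp add: semg_len)
    finally show ?thesis using k wf by (simp add: semg_len)
  qed
  finally show ?case by simp
next
  case (Tens f g)
  let ?a = "dom f" and ?b = "cod f" and ?c = "dom g" and ?d = "cod g"
  let ?F = "sem f (vars ?a)" and ?G = "sem g (vars ?c)"
  have wf: "wt f" "wt g" using Tens by auto
  have semT: "sem (Tens f g) (vars (dom (Tens f g))) = ?F @ map (subst (map V [?a..<?a+?c])) ?G"
    using sem_inst[of g "map V [?a..<?a+?c]"] wf by (simp add: vars_add_take vars_add_drop)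
  show ?case
  proof (cases "k < ?b")
    case True
    have "eqA (?a + ?c) 1 (Comp (Tens f g) (proj (?b + ?d) k)) (Comp (Comp (p1 ?a ?c) f) (proj ?b k))"
    proof (rule proj_comp_step)
      show "eqA (?b + ?d) 1 (proj (?b + ?d) k) (Comp (p1 ?b ?d) (proj ?b k))" by (rule PR1) (use True in simp)
      show "eqA (?a + ?c) (cod (p1 ?b ?d)) (Comp (Tens f g) (p1 ?b ?d)) (Comp (p1 ?a ?c) f)"
        using TP1[OF wf] by simp
    qed (use True wf in simp_all)
    also have "eqA (?a + ?c) 1 \<dots> (Comp (p1 ?a ?c) (Comp f (proj ?b k)))"
      by (rule E_assoc) (use True wf in simp_all)
    also have "eqA (?a + ?c) 1 \<dots> (Comp (p1 ?a ?c) (K ?a (?F ! k)))"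
      by (rule E_compR) (use Tens.IH(1)[of k] wf True in simp_all)
    also have "eqA (?a + ?c) 1 \<dots> (K (?a + ?c) (subst (vars ?a) (?F ! k)))"
    proof (rule SL)
      fix j assume j: "j < ?a"
      show "eqA (?a + ?c) 1 (Comp (p1 ?a ?c) (proj ?a j)) (K (?a + ?c) (vars ?a ! j))"
        using E_sym[OF PR1[OF j, of ?c]] j by simp
    qed simp_all
    also have "subst (vars ?a) (?F ! k) = ?F ! k"
      using subst_vars_id[OF wf(1)] True wf by (metis nth_map sem_vars_len)
    finally show ?thesis using True semT wf by (simp add: nth_append semg_len)
  next
    case False
    define j where "j = k - ?b"
    have j: "k = ?b + j" "j < ?d" using Tens False by (simp_all add: j_def)
    have "eqA (?a + ?c) 1 (Comp (Tens f g) (proj (?b + ?d) (?b + j))) (Comp (Comp (p2 ?a ?c) g) (proj ?d j))"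
    proof (rule proj_comp_step)
      show "eqA (?b + ?d) 1 (proj (?b + ?d) (?b + j)) (Comp (p2 ?b ?d) (proj ?d j))" by (rule PR2) (use j in simp)
      show "eqA (?a + ?c) (cod (p2 ?b ?d)) (Comp (Tens f g) (p2 ?b ?d)) (Comp (p2 ?a ?c) g)"
        using TP2[OF wf] by simp
    qed (use j wf in simp_all)
    also have "eqA (?a + ?c) 1 \<dots> (Comp (p2 ?a ?c) (Comp g (proj ?d j)))"
      by (rule E_assoc) (use j wf in simp_all)
    also have "eqA (?a + ?c) 1 \<dots> (Comp (p2 ?a ?c) (K ?c (?G ! j)))"
      by (rule E_compR) (use Tens.IH(2)[of j] wf j in simp_all)
    also have "eqA (?a + ?c) 1 \<dots> (K (?a + ?c) (subst (map V [?a..<?a+?c]) (?G ! j)))"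
    proof (rule SL)
      fix i assume i: "i < ?c"
      show "eqA (?a + ?c) 1 (Comp (p2 ?a ?c) (proj ?c i)) (K (?a + ?c) (map V [?a..<?a+?c] ! i))"
        using E_sym[OF PR2[OF i, of ?a]] i by simp
    qed simp_all
    finally show ?thesis using j semT wf by (simp add: nth_append semg_len)
  qed
qed




lemma semg_copy: "length xs = n \<Longrightarrow> semg z u p q (copy_n n) xs = xs @ xs"
proof (induction n arbitrary: xs)
  case (Suc n)
  then obtain x ys where xs: "xs = x # ys" and l: "length ys = n" by (cases xs) auto
  show ?case using Suc.IH[OF l] l by (simp add: xs)
qed simp

lemma semg_discard: "length xs = n \<Longrightarrow> semg z u p q (discard_n n) xs = []"
  by (induction n arbitrary: xs) auto

lemma sem_pair: "wt f \<Longrightarrow> wt g \<Longrightarrow> dom f = a \<Longrightarrow> dom g = a \<Longrightarrow> length xs = a \<Longrightarrow>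
  semg z u p q (pair a f g) xs = semg z u p q f xs @ semg z u p q g xs"
  by (simp add: pair_def semg_copy)

lemma sem_proj: "k < a \<Longrightarrow> length xs = a \<Longrightarrow> semg z u p q (proj a k) xs = [xs ! k]"
proof -
  assume k: "k < a" "length xs = a"
  have d: "drop k (take (Suc k) xs) = [xs ! k]" using k by (simp add: take_Suc_conv_app_nth)
  show ?thesis using k by (simp add: proj_def semg_discard d)
qed

lemma sem_K: "sem (K a t) (vars a) = [subst (vars a) t]"
  by (induction t) (auto simp: sem_proj sem_pair semg_discard)

lemma SCL: "wt f \<Longrightarrow> wt g \<Longrightarrow> dom f = a \<Longrightarrow> dom g = a \<Longrightarrow> cod f = b \<Longrightarrow> cod g = b \<Longrightarrow>
  sem f (vars a) = sem g (vars a) \<Longrightarrow> eqA a b f g"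
proof (rule EXT)
  fix k assume h: "wt f" "wt g" "dom f = a" "dom g = a" "cod f = b" "cod g = b"
    "sem f (vars a) = sem g (vars a)" "k < b"
  have "eqA a 1 (Comp f (proj b k)) (K a (sem f (vars a) ! k))" using CL[of f k] h by simp
  also have "eqA a 1 \<dots> (Comp g (proj b k))" using E_sym[OF CL[of g k]] h by simp
  finally show "eqA a 1 (Comp f (proj b k)) (Comp g (proj b k))" .
qed

inductive Eq :: "tm \<Rightarrow> tm \<Rightarrow> bool" where
  erefl: "Eq t t"
| esym: "Eq s t \<Longrightarrow> Eq t s"
| etrans: "Eq s t \<Longrightarrow> Eq t r \<Longrightarrow> Eq s r"
| epl: "Eq s s' \<Longrightarrow> Eq t t' \<Longrightarrow> Eq (Pl s t) (Pl s' t')"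
| eml: "Eq s s' \<Longrightarrow> Eq t t' \<Longrightarrow> Eq (Ml s t) (Ml s' t')"
| pl_comm: "Eq (Pl x y) (Pl y x)"
| pl_assoc: "Eq (Pl (Pl x y) z) (Pl x (Pl y z))"
| pl_unit: "Eq (Pl Zr x) x"
| pl_inv: "Eq (Pl x x) Zr"
| ml_comm: "Eq (Ml x y) (Ml y x)"
| ml_assoc: "Eq (Ml (Ml x y) z) (Ml x (Ml y z))"
| ml_unit: "Eq (Ml On x) x"
| distr: "Eq (Ml x (Pl y z)) (Pl (Ml x y) (Ml x z))"

text \<open>Axiom transport: K(l) = T ; Lc, Lc = Rc, T ; Rc = K(r).\<close>
lemma ax_step: assumes T: "wt T" "dom T = a" "cod T = n"
  and L: "wt Lc" "dom Lc = n" "cod Lc = 1" and Rw: "wt Rc" "dom Rc = n" "cod Rc = 1"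
  and LR: "eqA n 1 Lc Rc"
  and sl: "sem (K a l) (vars a) = sem (Comp T Lc) (vars a)"
  and sr: "sem (K a r) (vars a) = sem (Comp T Rc) (vars a)"
  shows "eqA a 1 (K a l) (K a r)"
proof -
  have "eqA a 1 (K a l) (Comp T Lc)" by (rule SCL) (use T L sl in simp_all)
  also have "eqA a 1 \<dots> (Comp T Rc)" by (rule E_compR) (use T LR in simp_all)
  also have "eqA a 1 \<dots> (K a r)" by (rule SCL) (use T Rw sr in simp_all)
  finally show ?thesis .
qed

lemma Elift: "Eq s t \<Longrightarrow> eqA a 1 (K a s) (K a t)"
proof (induction rule: Eq.induct)
  case (erefl t) then show ?case by (rule E_refl) simp_all
next
  case (esym s t) show ?case by (rule E_sym) (rule esym.IH)
next
  case (etrans s t r) show ?case by (rule eqA.trans[OF etrans.IH(1) etrans.IH(2)])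
next
  case (epl s s' t t') then show ?case
    by simp (rule E_compL, rule pair_cong, assumption+, simp_all)
next
  case (eml s s' t t') then show ?case
    by simp (rule E_compL, rule pair_cong, assumption+, simp_all)
next
  case (pl_comm x y) show ?case
    by (rule ax_step[where T="pair a (K a y) (K a x)" and Lc="Comp \<sigma> (Gen Add)" and Rc="Gen Add",
        OF _ _ _ _ _ _ _ _ _ eqA.add_comm])
       (simp_all add: sem_pair sem_K)
next
  case (pl_assoc x y z) show ?case
    by (rule ax_step[where T="pair a (K a x) (pair a (K a y) (K a z))"
        and Lc="Comp (Tens (Gen Add) (Id 1)) (Gen Add)" and Rc="Comp (Tens (Id 1) (Gen Add)) (Gen Add)",
        OF _ _ _ _ _ _ _ _ _ eqA.add_assoc])
       (simp_all add: sem_pair sem_K)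
next
  case (pl_unit x) show ?case
    by (rule ax_step[where T="K a x" and Lc="Comp (Tens (Gen Zero) (Id 1)) (Gen Add)" and Rc="Id 1",
        OF _ _ _ _ _ _ _ _ _ eqA.add_unit_left])
       (simp_all add: sem_pair sem_K)
next
  case (pl_inv x) show ?case
    by (rule ax_step[where T="K a x" and Lc="Comp (Gen Copy) (Gen Add)" and Rc="Comp (Gen Discard) (Gen Zero)",
        OF _ _ _ _ _ _ _ _ _ eqA.copy_add])
       (simp_all add: sem_pair sem_K)
next
  case (ml_comm x y) show ?case
    by (rule ax_step[where T="pair a (K a y) (K a x)" and Lc="Comp \<sigma> (Gen And)" and Rc="Gen And",
        OF _ _ _ _ _ _ _ _ _ eqA.and_comm])
       (simp_all add: sem_pair sem_K)
next
  case (ml_assoc x y z) show ?case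
    by (rule ax_step[where T="pair a (K a x) (pair a (K a y) (K a z))"
        and Lc="Comp (Tens (Gen And) (Id 1)) (Gen And)" and Rc="Comp (Tens (Id 1) (Gen And)) (Gen And)",
        OF _ _ _ _ _ _ _ _ _ eqA.and_assoc])
       (simp_all add: sem_pair sem_K)
next
  case (ml_unit x) show ?case
    by (rule ax_step[where T="K a x" and Lc="Comp (Tens (Gen One) (Id 1)) (Gen And)" and Rc="Id 1",
        OF _ _ _ _ _ _ _ _ _ eqA.and_unit_left])
       (simp_all add: sem_pair sem_K)
next
  case (distr x y z) show ?case
    by (rule ax_step[where T="pair a (K a x) (pair a (K a y) (K a z))"
        and Lc="Comp (Tens (Id 1) (Gen Add)) (Gen And)"
        and Rc="Comp (Comp (Comp (Tens (Gen Copy) (Id 2)) (Tens (Tens (Id 1) \<sigma>) (Id 1)))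
                 (Tens (Gen And) (Gen And))) (Gen Add)",
        OF _ _ _ _ _ _ _ _ _ eqA.distrib])
       (simp_all add: sem_pair sem_K)
qed

lemma CMP: "wt f \<Longrightarrow> wt g \<Longrightarrow> dom f = a \<Longrightarrow> dom g = a \<Longrightarrow> cod f = b \<Longrightarrow> cod g = b \<Longrightarrow>
  (\<And>k. k < b \<Longrightarrow> Eq (sem f (vars a) ! k) (sem g (vars a) ! k)) \<Longrightarrow> eqA a b f g"
proof (rule EXT)
  fix k assume h: "wt f" "wt g" "dom f = a" "dom g = a" "cod f = b" "cod g = b"
    "\<And>k. k < b \<Longrightarrow> Eq (sem f (vars a) ! k) (sem g (vars a) ! k)" "k < b"
  have "eqA a 1 (Comp f (proj b k)) (K a (sem f (vars a) ! k))" using CL[of f k] h by simp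
  also have "eqA a 1 \<dots> (K a (sem g (vars a) ! k))" using Elift h by simp
  also have "eqA a 1 \<dots> (Comp g (proj b k))" using E_sym[OF CL[of g k]] h by simp
  finally show "eqA a 1 (Comp f (proj b k)) (Comp g (proj b k))" .
qed



lemma Eq_equivp: "equivp Eq"
  by (rule equivpI) (auto simp: reflp_def symp_def transp_def intro: Eq.intros)

quotient_type qt = tm / Eq by (rule Eq_equivp)

instantiation qt :: comm_ring_1
begin
lift_definition zero_qt :: qt is Zr .
lift_definition one_qt :: qt is On .
lift_definition plus_qt :: "qt \<Rightarrow> qt \<Rightarrow> qt" is Pl by (rule epl)
lift_definition times_qt :: "qt \<Rightarrow> qt \<Rightarrow> qt" is Ml by (rule eml)
lift_definition uminus_qt :: "qt \<Rightarrow> qt" is "\<lambda>x. x" .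
lift_definition minus_qt :: "qt \<Rightarrow> qt \<Rightarrow> qt" is Pl by (rule epl)

fun evb :: "tm \<Rightarrow> bool" where
  "evb (V k) = False" | "evb Zr = False" | "evb On = True"
| "evb (Pl s t) = (evb s \<noteq> evb t)" | "evb (Ml s t) = (evb s \<and> evb t)"

lemma evb_Eq: "Eq s t \<Longrightarrow> evb s = evb t"
  by (induction rule: Eq.induct) auto

instance
proof
  fix a b c :: qt
  show "a * b * c = a * (b * c)" by transfer (rule ml_assoc)
  show "a * b = b * a" by transfer (rule ml_comm)
  show "1 * a = a" by transfer (rule ml_unit)
  show "a + b + c = a + (b + c)" by transfer (rule pl_assoc)
  show "a + b = b + a" by transfer (rule pl_comm)
  show "0 + a = a" by transfer (rule pl_unit)
  show "- a + a = 0" by transfer (rule pl_inv)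
  show "a - b = a + - b" by transfer (rule erefl)
  show "(a + b) * c = a * c + b * c"
    by transfer (meson Eq.intros)
  show "(0::qt) \<noteq> 1" by transfer (auto dest: evb_Eq)
qed
end

lemma qt_neg[simp]: "- (x::qt) = x" by transfer (rule erefl)
lemma qt_double[simp]: "(x::qt) + x = 0" using left_minus[of x] by simp

abbreviation absq :: "tm \<Rightarrow> qt" where "absq \<equiv> abs_qt"

lemma absq_simps: "absq Zr = 0" "absq On = 1" "absq (Pl s t) = absq s + absq t" "absq (Ml s t) = absq s * absq t"
  by (simp_all add: zero_qt_def one_qt_def plus_qt.abs_eq times_qt.abs_eq)

lemma absq_eq_iff: "absq s = absq t \<longleftrightarrow> Eq s t"
  by (simp add: qt.abs_eq_iff)

fun ev :: "(nat \<Rightarrow> qt) \<Rightarrow> tm \<Rightarrow> qt" where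
  "ev \<rho> (V k) = \<rho> k" | "ev \<rho> Zr = 0" | "ev \<rho> On = 1"
| "ev \<rho> (Pl s t) = ev \<rho> s + ev \<rho> t" | "ev \<rho> (Ml s t) = ev \<rho> s * ev \<rho> t"

lemma ev_Eq: "Eq s t \<Longrightarrow> ev \<rho> s = ev \<rho> t"
  by (induction rule: Eq.induct) (auto simp: algebra_simps)

lemma ev_absq: "ev (\<lambda>k. absq (V k)) t = absq t"
  by (induction t) (auto simp: absq_simps)

fun D :: "nat \<Rightarrow> tm \<Rightarrow> tm" where
  "D i (V k) = (if k = i then On else Zr)" | "D i Zr = Zr" | "D i On = Zr"
| "D i (Pl s t) = Pl (D i s) (D i t)"
| "D i (Ml s t) = Pl (Ml (D i s) t) (Ml s (D i t))"

lemma ev_D_Eq: "Eq s t \<Longrightarrow> ev \<rho> (D i s) = ev \<rho> (D i t)"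
proof (induction rule: Eq.induct)
  case (eml s s' t t') then show ?case using ev_Eq[OF eml.hyps(1)] ev_Eq[OF eml.hyps(2)] by simp
qed (auto simp: algebra_simps)

fun tv :: "tm \<Rightarrow> nat set" where
  "tv (V k) = {k}" | "tv Zr = {}" | "tv On = {}"
| "tv (Pl s t) = tv s \<union> tv t" | "tv (Ml s t) = tv s \<union> tv t"

lemma ev_cong: "(\<And>k. k \<in> tv t \<Longrightarrow> \<rho> k = \<rho>' k) \<Longrightarrow> ev \<rho> t = ev \<rho>' t"
  by (induction t) auto

lemma tv_D: "tv (D i t) \<subseteq> tv t"
  by (induction t) auto

lemma ev_D_notin: "i \<notin> tv t \<Longrightarrow> ev \<rho> (D i t) = 0"
  by (induction t) auto

definition evH :: "(nat \<Rightarrow> qt) \<Rightarrow> tm list \<Rightarrow> nat \<Rightarrow> qt" where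
  "evH \<rho> H k = (if k < length H then ev \<rho> (H ! k) else 0)"

lemma ev_subst: "ev \<rho> (subst H t) = ev (evH \<rho> H) t"
  by (induction t) (auto simp: evH_def)

lemma sum_delta_qt: "k < (n::nat) \<Longrightarrow> (\<Sum>j<n. (if k = j then 1 else 0) * (f j :: qt)) = f k"
proof -
  assume k: "k < n"
  have "(\<Sum>j<n. (if k = j then 1 else 0) * f j) = (\<Sum>j<n. if k = j then f j else 0)"
    by (rule sum.cong) auto
  also have "\<dots> = f k" using k by (subst sum.delta') auto
  finally show ?thesis .
qed

lemma ev_if01: "ev \<rho> (if c then On else Zr) = (if c then 1 else 0)" by simp

lemma chain: "ev \<rho> (D i (subst H t)) = (\<Sum>k<length H. ev (evH \<rho> H) (D k t) * ev \<rho> (D i (H ! k)))"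
proof (induction t)
  case (V k) then show ?case
    by (cases "k < length H") (simp add: sum_delta_qt ev_if01 del: ev.simps(2,3), simp)
next
  case (Pl s t) then show ?case by (simp add: sum.distrib algebra_simps)
next
  case (Ml s t) then show ?case
    by (simp add: sum.distrib algebra_simps sum_distrib_left sum_distrib_right ev_subst)
qed simp_all



abbreviation semq :: "circ \<Rightarrow> qt list \<Rightarrow> qt list" where "semq \<equiv> semg 0 1 (+) (*)"

lemma len3: "length xs = 3 \<Longrightarrow> \<exists>x y z. xs = [x, y, z]"
  by (cases xs; simp; case_tac list; simp; case_tac lista; simp)
lemma len2: "length xs = 2 \<Longrightarrow> \<exists>x y. xs = [x, y]"
  by (cases xs; simp; case_tac list; simp)
lemma len1: "length xs = Suc 0 \<Longrightarrow> \<exists>x. xs = [x]"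
  by (cases xs; simp)

lemma split3: "length xs = a + c + e \<Longrightarrow> (\<exists>x1 x2 x3. xs = x1 @ x2 @ x3 \<and> a = length x1 \<and> c = length x2 \<and> e = length x3)"
proof -
  assume l: "length xs = a + c + e"
  have "xs = take a xs @ take c (drop a xs) @ drop c (drop a xs)" by (simp only: append_take_drop_id)
  also have "drop c (drop a xs) = drop (a + c) xs" by (simp add: add.commute)
  finally show ?thesis using l by (intro exI[of _ "take a xs"] exI[of _ "take c (drop a xs)"] exI[of _ "drop (a + c) xs"]) simp
qed

lemma sound: "eqA a b f g \<Longrightarrow> length xs = a \<Longrightarrow> semq f xs = semq g xs"
proof (induction arbitrary: xs rule: eqA.induct)
  case (comp_cong a b f f' c g g')
  then show ?case using eqA_wt[OF comp_cong.hyps(1)] by (simp add: semg_len)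
next
  case (tens_cong a b f f' c d g g')
  then show ?case using eqA_wt[OF tens_cong.hyps(1)] by simp
next
  case (id_left f a b) then show ?case by simp
next
  case (id_right f a b) then show ?case by (simp add: has_type_iff semg_len)
next
  case (tens_assoc f a b g c d h e p)
  obtain x1 x2 x3 where "xs = x1 @ x2 @ x3" "a = length x1" "c = length x2" "e = length x3"
    using split3[OF tens_assoc.prems] by blast
  then show ?case using tens_assoc.hyps by (simp add: has_type_iff)
next
  case (tens_unit_left f a b) then show ?case by (simp add: has_type_iff)
next
  case (tens_unit_right f a b) then show ?case by (simp add: has_type_iff semg_len)
next
  case (tens_id m n) then show ?case by simp
next
  case (interchange f a b g c h d e k p) then show ?case
    by (simp add: has_type_iff semg_len)
next
  case (sym_inv m n) then show ?case by simp
next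
  case (sym_nat f a b g c d) then show ?case
    by (simp add: has_type_iff semg_len)
next
  case (sym_hex1 m n p)
  obtain x1 x2 x3 where "xs = x1 @ x2 @ x3" "m = length x1" "n = length x2" "p = length x3"
    using split3[OF sym_hex1.prems] by blast
  then show ?case by simp
next
  case (sym_hex2 m n p)
  obtain x1 x2 x3 where "xs = x1 @ x2 @ x3" "m = length x1" "n = length x2" "p = length x3"
    using split3[OF sym_hex2.prems] by blast
  then show ?case by simp
next
  case copy_comm then show ?case by (auto dest!: len1)
next
  case copy_assoc then show ?case by (auto dest!: len1)
next
  case copy_unit then show ?case by (auto dest!: len1)
next
  case (copy_nat f a b) then show ?case by (simp add: has_type_iff semg_len semg_copy)
next
  case (discard_nat f a b) then show ?case by (simp add: has_type_iff semg_len semg_discard)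
next
  case add_comm then show ?case by (auto dest!: len2 simp: add.commute)
next
  case add_assoc then show ?case by (auto dest!: len3 simp: add.assoc)
next
  case add_unit_left then show ?case by (auto dest!: len1)
next
  case add_unit_right then show ?case by (auto dest!: len1)
next
  case and_comm then show ?case by (auto dest!: len2 simp: mult.commute)
next
  case and_assoc then show ?case by (auto dest!: len3 simp: mult.assoc)
next
  case and_unit_left then show ?case by (auto dest!: len1)
next
  case and_unit_right then show ?case by (auto dest!: len1)
next
  case copy_add then show ?case by (auto dest!: len1)
next
  case distrib then show ?case by (auto dest!: len3 simp: distrib_left)
qed simp_all



lemma R_wt: "wt f \<Longrightarrow> wt (R f) \<and> dom (R f) = dom f + cod f \<and> cod (R f) = dom f"
proof (induction f)
  case (Gen g) then show ?case by (cases g) auto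
qed auto

lemma semg_inv:
  assumes "P z" "P u" "\<And>a b. P a \<Longrightarrow> P b \<Longrightarrow> P (p a b)" "\<And>a b. P a \<Longrightarrow> P b \<Longrightarrow> P (q a b)"
  shows "wt f \<Longrightarrow> length xs = dom f \<Longrightarrow> (\<forall>x\<in>set xs. P x) \<Longrightarrow> (\<forall>y\<in>set (semg z u p q f xs). P y)"
proof (induction f arbitrary: xs)
  case (Gen g) then show ?case by (cases g) (auto simp: assms)
next
  case (Sym m n) then show ?case by (auto dest: in_set_dropD in_set_takeD)
next
  case (Comp f g)
  have "\<forall>y\<in>set (semg z u p q f xs). P y" using Comp by simp
  moreover have "length (semg z u p q f xs) = dom g" using Comp.prems semg_len[of f xs z u p q] by simp
  ultimately show ?case using Comp.IH(2) Comp.prems by simp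
next
  case (Tens f g)
  have "\<forall>y\<in>set (semg z u p q f (take (dom f) xs)). P y"
    using Tens.IH(1)[of "take (dom f) xs"] Tens.prems by (auto dest: in_set_takeD)
  moreover have "\<forall>y\<in>set (semg z u p q g (drop (dom f) xs)). P y"
    using Tens.IH(2)[of "drop (dom f) xs"] Tens.prems by (auto dest: in_set_dropD)
  ultimately show ?case by auto
qed simp

lemma sem_tv: "wt f \<Longrightarrow> j < cod f \<Longrightarrow> tv (sem f (vars (dom f)) ! j) \<subseteq> {..<dom f}"
proof -
  assume h: "wt f" "j < cod f"
  have "\<forall>y\<in>set (sem f (vars (dom f))). tv y \<subseteq> {..<dom f}"
    by (rule semg_inv[where P="\<lambda>t. tv t \<subseteq> {..<dom f}"]) (use h in \<open>auto simp: vars_def\<close>)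
  then show ?thesis using h by (simp add: semg_len)
qed

abbreviation evl :: "qt list \<Rightarrow> tm \<Rightarrow> qt" where "evl xs \<equiv> ev (\<lambda>k. xs ! k)"

lemma semq_ev: "wt f \<Longrightarrow> length xs = dom f \<Longrightarrow> semq f xs = map (evl xs) (sem f (vars (dom f)))"
proof -
  assume h: "wt f" "length xs = dom f"
  have m: "map (evl xs) (vars (dom f)) = xs" using h by (intro nth_equalityI) (auto simp: vars_def)
  have "semq f (map (evl xs) (vars (dom f))) = map (evl xs) (sem f (vars (dom f)))"
    by (rule semg_hom) (use h in simp_all)
  then show ?thesis using m by simp
qed

definition RSf :: "circ \<Rightarrow> qt list \<Rightarrow> qt list \<Rightarrow> qt list" where
  "RSf f xs ds = map (\<lambda>i. \<Sum>j<cod f. evl xs (D i (sem f (vars (dom f)) ! j)) * ds ! j) [0..<dom f]"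

lemma sum_delta_qt': "k < (n::nat) \<Longrightarrow> (\<Sum>j<n. (if j = k then 1 else 0) * (f j :: qt)) = f k"
  using sum_delta_qt[of k n f] by (simp add: eq_commute)

lemma sum_split: "(\<Sum>j<b + (d::nat). f j) = (\<Sum>j<b. f j) + (\<Sum>j<d. (f (b + j) :: qt))"
  by (induction d) (simp_all add: add.assoc)

lemma ev_ifD: "ev \<rho> (if c then On else Zr) = (if c then 1 else 0)" by simp


lemma split2: "length xs = a + c \<Longrightarrow> (\<exists>x1 x2. xs = x1 @ x2 \<and> a = length x1 \<and> c = length x2)"
  by (rule exI[of _ "take a xs"], rule exI[of _ "drop a xs"]) simp

lemma ev_DV: "ev \<rho> (D i (V k)) = (if k = i then 1 else 0)" by simp

lemma RS_id: "length xs = n \<Longrightarrow> length ds = n \<Longrightarrow> semq (R (Id n)) (xs @ ds) = RSf (Id n) xs ds"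
proof -
  assume l: "length xs = n" "length ds = n"
  have "semq (R (Id n)) (xs @ ds) = ds" using l by (simp add: semg_discard)
  also have "ds = RSf (Id n) xs ds"
  proof (rule nth_equalityI)
    show "length ds = length (RSf (Id n) xs ds)" using l by (simp add: RSf_def)
    fix i assume i: "i < length ds"
    have "(\<Sum>j<n. evl xs (D i (vars n ! j)) * ds ! j) = (\<Sum>j<n. (if j = i then 1 else 0) * ds ! j)"
      by (rule sum.cong) (simp_all del: D.simps ev.simps add: ev_DV)
    also have "\<dots> = ds ! i" using i l by (simp add: sum_delta_qt')
    finally show "ds ! i = RSf (Id n) xs ds ! i" using i l by (simp add: RSf_def)
  qed
  finally show ?thesis .
qed

lemma RS_sym: "length xs = m + n \<Longrightarrow> length ds = n + m \<Longrightarrow> semq (R (Sym m n)) (xs @ ds) = RSf (Sym m n) xs ds"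
proof -
  assume l: "length xs = m + n" "length ds = n + m"
  have "semq (R (Sym m n)) (xs @ ds) = drop n ds @ take n ds" using l by (simp add: semg_discard)
  also have "\<dots> = RSf (Sym m n) xs ds"
  proof (rule nth_equalityI)
    show "length (drop n ds @ take n ds) = length (RSf (Sym m n) xs ds)" using l by (simp add: RSf_def)
    fix i assume i: "i < length (drop n ds @ take n ds)"
    then have i': "i < m + n" using l by simp
    define t where "t = (if i < m then n + i else i - m)"
    have t: "t < n + m" using i' by (auto simp: t_def)
    have S: "j < n + m \<Longrightarrow> sem (Sym m n) (vars (m + n)) ! j = V (if j < n then m + j else j - n)" for j
      by (simp add: vars_def nth_append)
    have "(\<Sum>j<n + m. evl xs (D i (sem (Sym m n) (vars (m + n)) ! j)) * ds ! j)
        = (\<Sum>j<n + m. (if j = t then 1 else 0) * ds ! j)"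
    proof (rule sum.cong)
      fix j assume j: "j \<in> {..<n + m}"
      have "((if j < n then m + j else j - n) = i) = (j = t)" using j i' by (auto simp: t_def)
      then show "evl xs (D i (sem (Sym m n) (vars (m + n)) ! j)) * ds ! j = (if j = t then 1 else 0) * ds ! j"
        using S[of j] j by (simp del: D.simps ev.simps add: ev_DV)
    qed simp
    also have "\<dots> = ds ! t" using t by (simp add: sum_delta_qt')
    also have "\<dots> = (drop n ds @ take n ds) ! i" using l i' by (auto simp: t_def nth_append)
    finally show "(drop n ds @ take n ds) ! i = RSf (Sym m n) xs ds ! i" using i' by (simp add: RSf_def)
  qed
  finally show ?thesis .
qed


lemma len2': "length xs = Suc (Suc 0) \<Longrightarrow> \<exists>x y. xs = [x, y]"
  using len2 by (simp add: numeral_2_eq_2)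
lemma len0: "length xs = 0 \<Longrightarrow> xs = []" by simp

lemma RS_gen: assumes "length xs = gen_dom g" "length ds = gen_cod g"
  shows "semq (R (Gen g)) (xs @ ds) = RSf (Gen g) xs ds"
  using assms
proof (cases g)
  case Discard then show ?thesis using assms
    by (auto dest!: len1 simp: RSf_def semg_discard)
next
  case Copy then show ?thesis using assms
    by (auto dest!: len1 len2' simp: RSf_def vars_def numeral_2_eq_2)
next
  case Zero then show ?thesis using assms
    by (auto dest!: len1 simp: RSf_def)
next
  case One then show ?thesis using assms
    by (auto dest!: len1 simp: RSf_def)
next
  case Add then show ?thesis using assms
    by (auto dest!: len1 len2' simp: RSf_def vars_def numeral_2_eq_2)
next
  case And then show ?thesis using assms
    by (auto dest!: len1 len2' simp: RSf_def vars_def numeral_2_eq_2)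
qed


lemma RS_comp:
  assumes wf: "wt f" "wt g" "cod f = dom g"
  and IHf: "\<And>xs ds. length xs = dom f \<Longrightarrow> length ds = cod f \<Longrightarrow> semq (R f) (xs @ ds) = RSf f xs ds"
  and IHg: "\<And>xs ds. length xs = dom g \<Longrightarrow> length ds = cod g \<Longrightarrow> semq (R g) (xs @ ds) = RSf g xs ds"
  and l: "length xs = dom f" "length ds = cod g"
  shows "semq (R (Comp f g)) (xs @ ds) = RSf (Comp f g) xs ds"
proof -
  let ?a = "dom f" and ?b = "cod f" and ?c = "cod g"
  let ?F = "sem f (vars ?a)" and ?G = "sem g (vars ?b)"
  let ?Y = "semq f xs"
  have lY: "length ?Y = ?b" using semg_len[of f xs 0 1 "(+)" "(*)"] wf l by simp
  have Y: "?Y = map (evl xs) ?F" using semq_ev wf l by simp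
  have lF: "length ?F = ?b" using semg_len[of f "vars ?a" Zr On Pl Ml] wf by simp
  have Rf: "wt (R f)" "dom (R f) = ?a + ?b" "cod (R f) = ?a" using R_wt[OF wf(1)] by auto
  have Rg: "wt (R g)" "dom (R g) = ?b + ?c" "cod (R g) = ?b" using R_wt[OF wf(2)] wf by auto
  have "semq (R (Comp f g)) (xs @ ds) = semq (R f) (xs @ semq (R g) (?Y @ ds))"
    using l lY wf Rf Rg by (simp add: semg_copy semg_len)
  also have "\<dots> = RSf f xs (RSf g ?Y ds)"
    using IHg[of ?Y ds] IHf[of xs "RSf g ?Y ds"] l lY wf by (simp add: RSf_def)
  also have "\<dots> = RSf (Comp f g) xs ds"
  proof (rule nth_equalityI)
    show "length (RSf f xs (RSf g ?Y ds)) = length (RSf (Comp f g) xs ds)" by (simp add: RSf_def)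
    fix i assume "i < length (RSf f xs (RSf g ?Y ds))"
    then have i: "i < ?a" by (simp add: RSf_def)
    define A where "A k = evl xs (D i (?F ! k))" for k
    define E where "E k j = evl ?Y (D k (?G ! j))" for k j
    have semc: "j < ?c \<Longrightarrow> sem g ?F ! j = subst ?F (?G ! j)" for j
      using sem_inst[of g ?F] wf lF by (simp add: semg_len)
    have ch: "j < ?c \<Longrightarrow> evl xs (D i (subst ?F (?G ! j))) = (\<Sum>k<?b. E k j * A k)" for j
    proof -
      assume j: "j < ?c"
      have "evl xs (D i (subst ?F (?G ! j))) = (\<Sum>k<?b. ev (evH (\<lambda>k. xs ! k) ?F) (D k (?G ! j)) * A k)"
        using chain[of "\<lambda>k. xs ! k" i ?F "?G ! j"] lF by (simp add: A_def)
      also have "\<dots> = (\<Sum>k<?b. E k j * A k)"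
      proof (rule sum.cong)
        fix k assume k: "k \<in> {..<?b}"
        have "ev (evH (\<lambda>k. xs ! k) ?F) (D k (?G ! j)) = evl ?Y (D k (?G ! j))"
        proof (rule ev_cong)
          fix v assume v: "v \<in> tv (D k (?G ! j))"
          then have "v < ?b" using tv_D sem_tv[of g j] wf j by auto
          then show "evH (\<lambda>k. xs ! k) ?F v = ?Y ! v" using Y lF by (simp add: evH_def)
        qed
        then show "ev (evH (\<lambda>k. xs ! k) ?F) (D k (?G ! j)) * A k = E k j * A k" by (simp add: E_def)
      qed simp
      finally show ?thesis .
    qed
    have "RSf f xs (RSf g ?Y ds) ! i = (\<Sum>k<?b. A k * (\<Sum>j<?c. E k j * ds ! j))"
      using i wf by (simp add: RSf_def A_def E_def)
    also have "\<dots> = (\<Sum>k<?b. \<Sum>j<?c. E k j * A k * ds ! j)"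
      by (simp add: sum_distrib_left mult_ac)
    also have "\<dots> = (\<Sum>j<?c. \<Sum>k<?b. E k j * A k * ds ! j)"
      by (rule sum.swap)
    also have "\<dots> = (\<Sum>j<?c. (\<Sum>k<?b. E k j * A k) * ds ! j)"
      by (simp add: sum_distrib_right)
    also have "\<dots> = (\<Sum>j<?c. evl xs (D i (sem (Comp f g) (vars (dom (Comp f g))) ! j)) * ds ! j)"
      by (rule sum.cong) (simp_all add: semc ch)
    also have "\<dots> = RSf (Comp f g) xs ds ! i" using i by (simp add: RSf_def)
    finally show "RSf f xs (RSf g ?Y ds) ! i = RSf (Comp f g) xs ds ! i" .
  qed
  finally show ?thesis .
qed


lemma RS_tens:
  assumes wf: "wt f" "wt g"
  and IHf: "\<And>xs ds. length xs = dom f \<Longrightarrow> length ds = cod f \<Longrightarrow> semq (R f) (xs @ ds) = RSf f xs ds"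
  and IHg: "\<And>xs ds. length xs = dom g \<Longrightarrow> length ds = cod g \<Longrightarrow> semq (R g) (xs @ ds) = RSf g xs ds"
  and l: "length xs = dom f + dom g" "length ds = cod f + cod g"
  shows "semq (R (Tens f g)) (xs @ ds) = RSf (Tens f g) xs ds"
proof -
  let ?a = "dom f" and ?b = "cod f" and ?c = "dom g" and ?d = "cod g"
  let ?F = "sem f (vars ?a)" and ?G = "sem g (vars ?c)" and ?Vs = "map V [?a..<?a+?c]"
  obtain xa xc where x: "xs = xa @ xc" "?a = length xa" "?c = length xc" using split2[OF l(1)] by blast
  obtain db dd where d: "ds = db @ dd" "?b = length db" "?d = length dd" using split2[OF l(2)] by blast
  have Rf: "wt (R f)" "dom (R f) = ?a + ?b" "cod (R f) = ?a" using R_wt[OF wf(1)] by auto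
  have Rg: "wt (R g)" "dom (R g) = ?c + ?d" "cod (R g) = ?c" using R_wt[OF wf(2)] by auto
  have "semq (R (Tens f g)) (xs @ ds) = semq (R f) (xa @ db) @ semq (R g) (xc @ dd)"
    using Rf Rg x d by simp
  also have "\<dots> = RSf f xa db @ RSf g xc dd" using IHf[of xa db] IHg[of xc dd] x d by simp
  also have "\<dots> = RSf (Tens f g) xs ds"
  proof (rule nth_equalityI)
    show "length (RSf f xa db @ RSf g xc dd) = length (RSf (Tens f g) xs ds)" using x by (simp add: RSf_def)
    fix i assume "i < length (RSf f xa db @ RSf g xc dd)"
    then have i: "i < ?a + ?c" using x by (simp add: RSf_def)
    have lF: "length ?F = ?b" using semg_len[of f "vars ?a" Zr On Pl Ml] wf by simp
    have lG: "length ?G = ?d" using semg_len[of g "vars ?c" Zr On Pl Ml] wf by simp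
    have semT: "sem (Tens f g) (vars (dom (Tens f g))) = ?F @ map (subst ?Vs) ?G"
      using sem_inst[of g ?Vs] wf by (simp add: vars_add_take vars_add_drop)
    define E where "E k j = evl xc (D k (?G ! j))" for k j
    have ch: "j < ?d \<Longrightarrow> evl xs (D i (subst ?Vs (?G ! j))) = (\<Sum>k<?c. E k j * (if ?a + k = i then 1 else 0))" for j
    proof -
      assume j: "j < ?d"
      have "evl xs (D i (subst ?Vs (?G ! j))) = (\<Sum>k<?c. ev (evH (\<lambda>k. xs ! k) ?Vs) (D k (?G ! j)) * evl xs (D i (?Vs ! k)))"
        using chain[of "\<lambda>k. xs ! k" i ?Vs "?G ! j"] by simp
      also have "\<dots> = (\<Sum>k<?c. E k j * (if ?a + k = i then 1 else 0))"
      proof (rule sum.cong)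
        fix k assume k: "k \<in> {..<?c}"
        have "ev (evH (\<lambda>k. xs ! k) ?Vs) (D k (?G ! j)) = evl xc (D k (?G ! j))"
        proof (rule ev_cong)
          fix v assume v: "v \<in> tv (D k (?G ! j))"
          then have "v < ?c" using tv_D sem_tv[of g j] wf j by auto
          then show "evH (\<lambda>k. xs ! k) ?Vs v = xc ! v" using x by (simp add: evH_def nth_append)
        qed
        then show "ev (evH (\<lambda>k. xs ! k) ?Vs) (D k (?G ! j)) * evl xs (D i (?Vs ! k)) = E k j * (if ?a + k = i then 1 else 0)"
          using k by (simp add: E_def)
      qed simp
      finally show ?thesis .
    qed
    have RT: "RSf (Tens f g) xs ds ! i = (\<Sum>j<?b. evl xs (D i (?F ! j)) * db ! j)
        + (\<Sum>j<?d. evl xs (D i (subst ?Vs (?G ! j))) * dd ! j)"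
      using i semT lF lG d by (simp add: RSf_def sum_split nth_append)
    show "(RSf f xa db @ RSf g xc dd) ! i = RSf (Tens f g) xs ds ! i"
    proof (cases "i < ?a")
      case True
      have "(\<Sum>j<?d. evl xs (D i (subst ?Vs (?G ! j))) * dd ! j) = 0"
        by (rule sum.neutral) (use True in \<open>simp add: ch\<close>)
      moreover have "(\<Sum>j<?b. evl xs (D i (?F ! j)) * db ! j) = (\<Sum>j<?b. evl xa (D i (?F ! j)) * db ! j)"
      proof (rule sum.cong)
        fix j assume j: "j \<in> {..<?b}"
        have "evl xs (D i (?F ! j)) = evl xa (D i (?F ! j))"
        proof (rule ev_cong)
          fix v assume v: "v \<in> tv (D i (?F ! j))"
          then have "v < ?a" using tv_D sem_tv[of f j] wf j by auto
          then show "xs ! v = xa ! v" using x by (simp add: nth_append)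
        qed
        then show "evl xs (D i (?F ! j)) * db ! j = evl xa (D i (?F ! j)) * db ! j" by simp
      qed simp
      ultimately show ?thesis using RT True x by (simp add: RSf_def nth_append)
    next
      case False
      define i' where "i' = i - ?a"
      have i': "i = ?a + i'" "i' < ?c" using False i by (simp_all add: i'_def)
      have "(\<Sum>j<?b. evl xs (D i (?F ! j)) * db ! j) = 0"
      proof (rule sum.neutral)
        show "\<forall>j\<in>{..<?b}. evl xs (D i (?F ! j)) * db ! j = 0"
        proof
          fix j assume j: "j \<in> {..<?b}"
          have "i \<notin> tv (?F ! j)" using sem_tv[of f j] wf j False by auto
          then show "evl xs (D i (?F ! j)) * db ! j = 0" by (simp add: ev_D_notin)
        qed
      qed
      moreover have "(\<Sum>j<?d. evl xs (D i (subst ?Vs (?G ! j))) * dd ! j) = (\<Sum>j<?d. E i' j * dd ! j)"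
      proof (rule sum.cong)
        fix j assume j: "j \<in> {..<?d}"
        have "(\<Sum>k<?c. E k j * (if ?a + k = i then 1 else 0)) = (\<Sum>k<?c. (if k = i' then 1 else 0) * E k j)"
          by (rule sum.cong) (auto simp: i')
        also have "\<dots> = E i' j" using i' by (simp add: sum_delta_qt')
        finally show "evl xs (D i (subst ?Vs (?G ! j))) * dd ! j = E i' j * dd ! j" using ch j by simp
      qed simp
      ultimately show ?thesis using RT i' x by (simp add: RSf_def nth_append E_def)
    qed
  qed
  finally show ?thesis .
qed

lemma RS: "wt f \<Longrightarrow> length xs = dom f \<Longrightarrow> length ds = cod f \<Longrightarrow> semq (R f) (xs @ ds) = RSf f xs ds"
proof (induction f arbitrary: xs ds)
  case (Gen g) then show ?case using RS_gen by simp
next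
  case (Id n) then show ?case using RS_id by simp
next
  case (Sym m n) then show ?case using RS_sym by simp
next
  case (Comp f g) then show ?case using RS_comp[of f g xs ds] by simp
next
  case (Tens f g) then show ?case using RS_tens[of f g xs ds] by simp
qed



lemma absq_hom: "wt f \<Longrightarrow> length xs = dom f \<Longrightarrow> map absq (sem f xs) = semq f (map absq xs)"
  by (rule semg_hom[symmetric]) (simp_all add: absq_simps)

lemma evl_absq: "tv t \<subseteq> {..<a} \<Longrightarrow> evl (map absq (vars a)) t = absq t"
proof -
  assume h: "tv t \<subseteq> {..<a}"
  have "evl (map absq (vars a)) t = ev (\<lambda>k. absq (V k)) t"
    by (rule ev_cong) (use h in auto)
  then show ?thesis by (simp add: ev_absq)
qed

theorem mainTheorem3:
  assumes "has_type c a b" and "has_type d a b" and "eqA a b c d"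
  shows "eqA (a + b) a (R c) (R d)"
proof -
  have wc: "wt c" "dom c = a" "cod c = b" and wd: "wt d" "dom d = a" "cod d = b"
    using assms(1,2) by (auto simp: has_type_iff)
  have Rc: "wt (R c)" "dom (R c) = a + b" "cod (R c) = a" using R_wt[OF wc(1)] wc by auto
  have Rd: "wt (R d)" "dom (R d) = a + b" "cod (R d) = a" using R_wt[OF wd(1)] wd by auto
  let ?XA = "map absq (vars a)" and ?XD = "map absq (map V [a..<a+b])"
  let ?C = "sem c (vars a)" and ?D = "sem d (vars a)"
  have vsplit: "vars (a + b) = vars a @ map V [a..<a+b]"
  proof -
    have "[0..<a + b] = [0..<a] @ [a..<a + b]" by (rule upt_add_eq_append) simp
    then show ?thesis unfolding vars_def by simp
  qed
  have lC: "length ?C = b" using semg_len[of c "vars a" Zr On Pl Ml] wc by simp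
  have lD: "length ?D = b" using semg_len[of d "vars a" Zr On Pl Ml] wd by simp
  have CD: "map absq ?C = map absq ?D"
    using absq_hom[of c "vars a"] absq_hom[of d "vars a"] sound[OF assms(3), of ?XA] wc wd by simp
  have EqCD: "j < b \<Longrightarrow> Eq (?C ! j) (?D ! j)" for j
    using arg_cong[OF CD, of "\<lambda>l. l ! j"] lC lD by (simp add: absq_eq_iff)
  have RSeq: "RSf c ?XA ?XD = RSf d ?XA ?XD"
    unfolding RSf_def wc wd
  proof (rule map_cong[OF HOL.refl], rule sum.cong[OF HOL.refl])
    fix i j assume i: "i \<in> set [0..<a]" and j: "j \<in> {..<b}"
    have t1: "tv (D i (?C ! j)) \<subseteq> {..<a}" using tv_D sem_tv[of c j] wc j by fastforce
    have t2: "tv (D i (?D ! j)) \<subseteq> {..<a}" using tv_D sem_tv[of d j] wd j by fastforce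
    have "evl ?XA (D i (?C ! j)) = absq (D i (?C ! j))" using evl_absq[OF t1] .
    also have "\<dots> = ev (\<lambda>k. absq (V k)) (D i (?C ! j))" by (simp add: ev_absq)
    also have "\<dots> = ev (\<lambda>k. absq (V k)) (D i (?D ! j))" using ev_D_Eq[OF EqCD] j by simp
    also have "\<dots> = absq (D i (?D ! j))" by (simp add: ev_absq)
    also have "\<dots> = evl ?XA (D i (?D ! j))" using evl_absq[OF t2] by simp
    finally show "evl ?XA (D i (?C ! j)) * ?XD ! j = evl ?XA (D i (?D ! j)) * ?XD ! j" by simp
  qed
  have SR: "map absq (sem (R c) (vars (a + b))) = map absq (sem (R d) (vars (a + b)))"
  proof -
    have "map absq (sem (R c) (vars (a + b))) = semq (R c) (?XA @ ?XD)"
      using absq_hom[of "R c" "vars (a + b)"] Rc vsplit by simp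
    also have "\<dots> = RSf c ?XA ?XD" using RS[of c ?XA ?XD] wc by simp
    also have "\<dots> = RSf d ?XA ?XD" by (rule RSeq)
    also have "\<dots> = semq (R d) (?XA @ ?XD)" using RS[of d ?XA ?XD] wd by simp
    also have "\<dots> = map absq (sem (R d) (vars (a + b)))"
      using absq_hom[of "R d" "vars (a + b)"] Rd vsplit by simp
    finally show ?thesis .
  qed
  show ?thesis
  proof (rule CMP)
    fix k assume k: "k < a"
    have l1: "length (sem (R c) (vars (a + b))) = a" using semg_len[of "R c" "vars (a+b)" Zr On Pl Ml] Rc by simp
    have l2: "length (sem (R d) (vars (a + b))) = a" using semg_len[of "R d" "vars (a+b)" Zr On Pl Ml] Rd by simp
    show "Eq (sem (R c) (vars (a + b)) ! k) (sem (R d) (vars (a + b)) ! k)"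
      using arg_cong[OF SR, of "\<lambda>l. l ! k"] k l1 l2 by (simp add: absq_eq_iff)
  qed (use Rc Rd in simp_all)
qed


end
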